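(* Fix integers $d_1,d_2\ge0$ and $a_1,a_2\ge0$, and let $(S_1,S_2)$ be a compatible pair on $D_{a_1,a_2}$ with $S_1(h)\le d_1$ for all $h\in D_1$ and $S_2(v)\le d_2$ for all $v\in D_2$. (a) If $0\le d_2a_2\le a_1$, then $(|S_1|,|S_2|)$ lies in the (possibly degenerate) trapezoid that is the convex hull of $(0,0)$, $(d_1a_1,0)$, $(0,d_2a_2)$, $(d_1a_1-d_1d_2a_2,d_2a_2)$. (b) If $0\le d_1a_1\le a_2$, then $(|S_1|,|S_2|)$ lies in the (possibly degenerate) trapezoid that is the convex hull of $(0,0)$, $(d_1a_1,0)$, $(0,d_2a_2)$, $(d_1a_1,d_2a_2-d_1d_2a_1)$. (c) If $0<a_1<d_2a_2$ and $0<a_2<d_1a_1$, then $(|S_1|,|S_2|)$ lies in the non-convex quadrilateral with corner vertices $(0,0)$, $(d_1a_1,0)$, $(a_2,a_1)$, $(0,d_2a_2)$ (closed region bounded by the polygon $(0,0)\to(d_1a_1,0)\to(a_2,a_1)\to(0,d_2a_2)\to(0,0)$), where the boundary segments $[(0,0),(d_1a_1,0)]$ and $[(0,0),(0,d_2a_2)]$ are included while the boundary segments $((d_1a_1,0),(a_2,a_1)]$ and $((0,d_2a_2),(a_2,a_1)]$ are excluded.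
   Context: Maximal Dyck path: $D=D_{a_1,a_2}$ is the lattice path of unit East and North steps from $(0,0)$ to $(a_1,a_2)$ staying weakly below the diagonal of $[0,a_1]\times[0,a_2]$ and closest to it. $D_1$, $D_2$ are its sets of horizontal and vertical edges. Identify $(0,0)\equiv(a_1,a_2)$ so $D$ is a cyclic sequence of edges; for edges $e,e'$, $ee'$ is the subpath from $e$ to $e'$ inclusive following $D$ cyclically, and $(ee')_1,(ee')_2$ are its horizontal and vertical edges. Gradings $S_1:D_1\to\mathbb{Z}_{\ge0}$, $S_2:D_2\to\mathbb{Z}_{\ge0}$ form a compatible pair if for every $h\in D_1$, $v\in D_2$ there is an edge $e$ with either $he$ a proper subpath of $hv$ and $|(he)_2|=\sum_{h'\in(he)_1}S_1(h')$, or $ev$ a proper subpath of $hv$ and $|(ev)_1|=\sum_{v'\in(ev)_2}S_2(v')$. $|S_i|$ denotes the sum of the values of $S_i$. *)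

theory Defs
  imports "HOL-Analysis.Analysis"
begin

text \<open>The maximal Dyck path D_{a1,a2} as a word of steps (True = East, False = North).
  For a1 > 0, the i-th East step (i = 0..a1-1) is followed by the North steps raising the
  height from floor(a2*i/a1) to floor(a2*(i+1)/a1); this is the highest lattice path
  weakly below the diagonal.\<close>
definition dyck_word :: "nat \<Rightarrow> nat \<Rightarrow> bool list" where
  "dyck_word a1 a2 =
     (if a1 = 0 then replicate a2 False
      else concat (map (\<lambda>i. True # replicate (a2 * (i + 1) div a1 - a2 * i div a1) False) [0..<a1]))"

text \<open>Edges are indexed by their position 0..<a1+a2 along the path.\<close>
definition D1 :: "nat \<Rightarrow> nat \<Rightarrow> nat set" where
  "D1 a1 a2 = {i. i < a1 + a2 \<and> dyck_word a1 a2 ! i}"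

definition D2 :: "nat \<Rightarrow> nat \<Rightarrow> nat set" where
  "D2 a1 a2 = {i. i < a1 + a2 \<and> \<not> dyck_word a1 a2 ! i}"

text \<open>Cyclic subpath from edge i to edge j (inclusive) in a cycle of n edges.\<close>
definition cyc :: "nat \<Rightarrow> nat \<Rightarrow> nat \<Rightarrow> nat set" where
  "cyc n i j = {(i + k) mod n | k. k \<le> (j + n - i) mod n}"

definition compatible_pair :: "nat \<Rightarrow> nat \<Rightarrow> (nat \<Rightarrow> nat) \<Rightarrow> (nat \<Rightarrow> nat) \<Rightarrow> bool" where
  "compatible_pair a1 a2 S1 S2 \<longleftrightarrow>
     (\<forall>h \<in> D1 a1 a2. \<forall>v \<in> D2 a1 a2. \<exists>e.
        (e \<in> cyc (a1 + a2) h v \<and> e \<noteq> v \<and>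
           card (cyc (a1 + a2) h e \<inter> D2 a1 a2) = (\<Sum>h' \<in> cyc (a1 + a2) h e \<inter> D1 a1 a2. S1 h'))
      \<or> (e \<in> cyc (a1 + a2) h v \<and> e \<noteq> h \<and>
           card (cyc (a1 + a2) e v \<inter> D1 a1 a2) = (\<Sum>v' \<in> cyc (a1 + a2) e v \<inter> D2 a1 a2. S2 v')))"

definition grading_size1 :: "nat \<Rightarrow> nat \<Rightarrow> (nat \<Rightarrow> nat) \<Rightarrow> nat" where
  "grading_size1 a1 a2 S1 = (\<Sum>h \<in> D1 a1 a2. S1 h)"

definition grading_size2 :: "nat \<Rightarrow> nat \<Rightarrow> (nat \<Rightarrow> nat) \<Rightarrow> nat" where
  "grading_size2 a1 a2 S2 = (\<Sum>v \<in> D2 a1 a2. S2 v)"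

end

theory Submission
  imports Defs
begin

lemma concat_blocks:
  fixes f :: "nat \<Rightarrow> nat"
  assumes mono: "mono f" and f0: "f 0 = 0"
  shows "length (concat (map (\<lambda>i. True # replicate (f (i + 1) - f i) False) [0..<m])) = m + f m
    \<and> (\<forall>j < m + f m. concat (map (\<lambda>i. True # replicate (f (i + 1) - f i) False) [0..<m]) ! j
          = (\<exists>i<m. j = i + f i))"
proof (induction m)
  case 0
  then show ?case using f0 by simp
next
  case (Suc m)
  let ?B = "\<lambda>i. True # replicate (f (i + 1) - f i) False"
  let ?W = "concat (map ?B [0..<m])"
  have eq: "concat (map ?B [0..<Suc m]) = ?W @ ?B m" by simp
  have fm: "f m \<le> f (Suc m)" using mono by (simp add: monoD)
  have len: "length ?W = m + f m" using Suc.IH by blast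
  have sm: "\<And>i. i < m \<Longrightarrow> i + f i < m + f m"
    using mono by (metis add_less_le_mono monoD order_less_imp_le)
  show ?case
  proof
    show "length (concat (map ?B [0..<Suc m])) = Suc m + f (Suc m)"
      using eq len fm by simp
    show "\<forall>j<Suc m + f (Suc m). concat (map ?B [0..<Suc m]) ! j = (\<exists>i<Suc m. j = i + f i)"
    proof (intro allI impI)
      fix j assume j: "j < Suc m + f (Suc m)"
      show "concat (map ?B [0..<Suc m]) ! j = (\<exists>i<Suc m. j = i + f i)"
      proof (cases "j < m + f m")
        case True
        then have "concat (map ?B [0..<Suc m]) ! j = ?W ! j" using eq len by (simp add: nth_append)
        also have "\<dots> = (\<exists>i<m. j = i + f i)" using Suc.IH True by blast
        also have "\<dots> = (\<exists>i<Suc m. j = i + f i)" using True less_Suc_eq by auto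
        finally show ?thesis .
      next
        case False
        then have "concat (map ?B [0..<Suc m]) ! j = ?B m ! (j - (m + f m))" using eq len by (simp add: nth_append)
        also have "\<dots> = (j = m + f m)" using False j fm
          by (cases "j - (m + f m)") auto
        also have "\<dots> = (\<exists>i<Suc m. j = i + f i)" using False sm less_Suc_eq by fastforce
        finally show ?thesis .
      qed
    qed
  qed
qed

lemma pos_char:
  fixes a1 a2 j :: nat
  assumes a1: "0 < a1" and j: "j < a1 + a2"
  shows "(\<exists>i<a1. j = i + a2 * i div a1) \<longleftrightarrow> (a2 * j) mod (a1 + a2) < a1"
proof
  assume "\<exists>i<a1. j = i + a2 * i div a1"
  then obtain i where i: "i < a1" "j = i + a2 * i div a1" by blast
  define q where "q = a2 * i div a1"
  define \<rho> where "\<rho> = a2 * i mod a1"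
  have d: "a2 * i = q * a1 + \<rho>" unfolding q_def \<rho>_def by simp
  have \<rho>: "\<rho> < a1" unfolding \<rho>_def using a1 by simp
  have "a2 * j = q * (a1 + a2) + \<rho>" using i(2) d unfolding q_def[symmetric]
    by (simp add: algebra_simps)
  then have "(a2 * j) mod (a1 + a2) = \<rho>" using \<rho> by simp
  then show "(a2 * j) mod (a1 + a2) < a1" using \<rho> by simp
next
  assume h: "(a2 * j) mod (a1 + a2) < a1"
  define q where "q = a2 * j div (a1 + a2)"
  define \<rho> where "\<rho> = a2 * j mod (a1 + a2)"
  have d: "a2 * j = q * (a1 + a2) + \<rho>" unfolding q_def \<rho>_def by (metis div_mult_mod_eq)
  have "q * (a1 + a2) \<le> j * (a1 + a2)" using d by (metis add.commute le_add2 mult.commute mult_le_mono1 order_trans trans_le_add2 le_add1)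
  then have qj: "q \<le> j" using a1 by simp
  define i where "i = j - q"
  have ai: "a2 * i = q * a1 + \<rho>" unfolding i_def using d qj
    by (simp add: diff_mult_distrib2 algebra_simps)
  have "a2 * i div a1 = q" using ai h unfolding \<rho>_def using a1 by simp
  then have ji: "j = i + a2 * i div a1" unfolding i_def using qj by simp
  have "i < a1"
  proof (rule ccontr)
    assume "\<not> i < a1"
    then have "a2 * a1 \<le> a2 * i" by simp
    then have "a2 \<le> a2 * i div a1" using a1
      by (metis div_le_mono nonzero_mult_div_cancel_right not_gr_zero)
    then show False using ji j \<open>\<not> i < a1\<close> by linarith
  qed
  then show "\<exists>i<a1. j = i + a2 * i div a1" using ji by blast
qed

lemma dyck_nth:
  assumes j: "j < a1 + a2"
  shows "dyck_word a1 a2 ! j = ((a2 * j) mod (a1 + a2) < a1)"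
proof (cases "a1 = 0")
  case True
  then show ?thesis using j by (simp add: dyck_word_def)
next
  case False
  have mono: "mono (\<lambda>i. a2 * i div a1)" by (rule monoI) (simp add: div_le_mono)
  have "a2 * a1 div a1 = a2" using False by simp
  then have jj: "j < a1 + (\<lambda>i. a2 * i div a1) a1" using j by simp
  have "dyck_word a1 a2 ! j = (\<exists>i<a1. j = i + a2 * i div a1)"
    using concat_blocks[OF mono, of a1] jj False unfolding dyck_word_def by simp
  then show ?thesis using pos_char False j by simp
qed


lemma isum_split:
  fixes \<phi> :: "int \<Rightarrow> 'b::comm_monoid_add"
  assumes "a \<le> b" "b \<le> c"
  shows "(\<Sum>i\<in>{a..<c}. \<phi> i) = (\<Sum>i\<in>{a..<b}. \<phi> i) + (\<Sum>i\<in>{b..<c}. \<phi> i)"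
proof -
  have "{a..<c} = {a..<b} \<union> {b..<c}" using assms by auto
  then show ?thesis by (simp add: sum.union_disjoint ivl_disj_int)
qed

lemma isum_last:
  fixes \<phi> :: "int \<Rightarrow> 'b::comm_monoid_add"
  assumes "a \<le> b"
  shows "(\<Sum>i\<in>{a..<b+1}. \<phi> i) = (\<Sum>i\<in>{a..<b}. \<phi> i) + \<phi> b"
  using isum_split[of a b "b+1" \<phi>] assms by (simp add: atLeastLessThanPlusOne_atLeastAtMost_int)

lemma isum_first:
  fixes \<phi> :: "int \<Rightarrow> 'b::comm_monoid_add"
  assumes "a < b"
  shows "(\<Sum>i\<in>{a..<b}. \<phi> i) = \<phi> a + (\<Sum>i\<in>{a+1..<b}. \<phi> i)"
  using isum_split[of a "a+1" b \<phi>] assms by (simp add: atLeastLessThanPlusOne_atLeastAtMost_int)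

lemma isum_shift:
  fixes \<phi> :: "int \<Rightarrow> 'b::comm_monoid_add"
  shows "(\<Sum>i\<in>{a..<b}. \<phi> (i + t)) = (\<Sum>i\<in>{a+t..<b+t}. \<phi> i)"
  by (rule sum.reindex_bij_witness[of _ "\<lambda>i. i - t" "\<lambda>i. i + t"]) auto

lemma isum_neg:
  fixes \<phi> :: "int \<Rightarrow> 'b::comm_monoid_add"
  shows "(\<Sum>i\<in>{a..<b}. \<phi> (- i)) = (\<Sum>i\<in>{1-b..<1-a}. \<phi> i)"
  by (rule sum.reindex_bij_witness[of _ "\<lambda>i. - i" "\<lambda>i. - i"]) auto

lemma isum_empty: "b \<le> a \<Longrightarrow> (\<Sum>i\<in>{a..<b::int}. \<phi> i) = 0"
  by simp

lemma per_mult: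
  fixes N :: int
  assumes "\<And>i. \<phi> (i + N) = \<phi> i"
  shows "\<phi> (i + k * N) = \<phi> i"
proof (induction k rule: int_induct[where k=0])
  case base then show ?case by simp
next
  case (step1 k)
  have "\<phi> (i + (k + 1) * N) = \<phi> (i + k * N + N)" by (simp add: algebra_simps)
  then show ?case using assms step1 by simp
next
  case (step2 k)
  have "\<phi> (i + k * N) = \<phi> (i + (k - 1) * N + N)" by (simp add: algebra_simps)
  then show ?case using assms step2 by simp
qed

lemma per_mod:
  fixes N :: int
  assumes "\<And>i. \<phi> (i + N) = \<phi> i"
  shows "\<phi> (i mod N) = \<phi> i"
proof -
  have "i = i mod N + (i div N) * N" by simp
  then have "\<phi> i = \<phi> (i mod N + (i div N) * N)" by metis
  also have "\<dots> = \<phi> (i mod N)" by (rule per_mult[where \<phi>=\<phi> and N=N, OF assms])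
  finally show ?thesis by simp
qed

lemma per_sum:
  fixes \<phi> :: "int \<Rightarrow> 'b::ab_group_add"
  assumes "\<And>i. \<phi> (i + N) = \<phi> i" and "0 \<le> N"
  shows "(\<Sum>i\<in>{a..<a+N}. \<phi> i) = (\<Sum>i\<in>{0..<N}. \<phi> i)"
proof (induction a rule: int_induct[where k=0])
  case base then show ?case by simp
next
  case (step1 k)
  have "(\<Sum>i\<in>{k..<k+N+1}. \<phi> i) = \<phi> k + (\<Sum>i\<in>{k+1..<k+1+N}. \<phi> i)"
    using isum_first[of k "k+N+1" \<phi>] assms(2) by (simp add: add.commute add.left_commute)
  moreover have "(\<Sum>i\<in>{k..<k+N+1}. \<phi> i) = (\<Sum>i\<in>{k..<k+N}. \<phi> i) + \<phi> k"
    using isum_last[of k "k+N" \<phi>] assms by simp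
  ultimately show ?case using step1 by (simp add: algebra_simps)
next
  case (step2 k)
  have "(\<Sum>i\<in>{k-1..<k+N}. \<phi> i) = \<phi> (k-1) + (\<Sum>i\<in>{k..<k+N}. \<phi> i)"
    using isum_first[of "k-1" "k+N" \<phi>] assms(2) by simp
  moreover have "(\<Sum>i\<in>{k-1..<k+N}. \<phi> i) = (\<Sum>i\<in>{k-1..<k-1+N}. \<phi> i) + \<phi> (k - 1 + N)"
    using isum_last[of "k-1" "k-1+N" \<phi>] assms by simp
  moreover have "\<phi> (k - 1 + N) = \<phi> (k-1)" using assms(1) by simp
  ultimately show ?case using step2 by (simp add: algebra_simps)
qed


lemma block_sum:
  fixes \<phi> :: "int \<Rightarrow> int"
  assumes "\<And>i. x \<le> i \<Longrightarrow> i < y \<Longrightarrow> \<exists>j. i \<le> j \<and> j < y \<and> 0 \<le> (\<Sum>k\<in>{i..<j+1}. \<phi> k)"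
    and "x \<le> y"
  shows "0 \<le> (\<Sum>k\<in>{x..<y}. \<phi> k)"
  using assms
proof (induction "nat (y - x)" arbitrary: x rule: less_induct)
  case less
  show ?case
  proof (cases "x = y")
    case True then show ?thesis by simp
  next
    case False
    then have xy: "x < y" using less.prems by simp
    obtain j where j: "x \<le> j" "j < y" "0 \<le> (\<Sum>k\<in>{x..<j+1}. \<phi> k)" using less.prems(1)[of x] xy by auto
    have "(\<Sum>k\<in>{x..<y}. \<phi> k) = (\<Sum>k\<in>{x..<j+1}. \<phi> k) + (\<Sum>k\<in>{j+1..<y}. \<phi> k)"
      using isum_split[of x "j+1" y] j by simp
    moreover have "0 \<le> (\<Sum>k\<in>{j+1..<y}. \<phi> k)"
      using less.hyps[of "j+1"] less.prems j by auto
    ultimately show ?thesis using j by simp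
  qed
qed

locale gen =
  fixes N :: int and hv :: "int \<Rightarrow> bool" and A B :: "int \<Rightarrow> int" and a1 a2 d1 :: int
  assumes Npos: "0 < N"
  and hv_per: "\<And>i. hv (i + N) = hv i"
  and A_per: "\<And>i. A (i + N) = A i" and B_per: "\<And>i. B (i + N) = B i"
  and A_nn: "\<And>i. 0 \<le> A i" and B_nn: "\<And>i. 0 \<le> B i"
  and A_off: "\<And>i. \<not> hv i \<Longrightarrow> A i = 0" and B_off: "\<And>i. hv i \<Longrightarrow> B i = 0"
  and A_le: "\<And>i. A i \<le> d1"
  and a1_eq: "a1 = (\<Sum>i\<in>{0..<N}. if hv i then 1 else 0)"
  and a2_eq: "a2 = N - a1"
  and CP: "\<And>h m. hv h \<Longrightarrow> \<not> hv (h + m) \<Longrightarrow> 0 \<le> m \<Longrightarrow> m < N \<Longrightarrow>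
      (\<exists>e. h \<le> e \<and> e < h + m \<and> (\<Sum>i\<in>{h..<e+1}. if hv i then - A i else 1) = 0)
    \<or> (\<exists>e. h < e \<and> e \<le> h + m \<and> (\<Sum>i\<in>{e..<h+m+1}. if hv i then 1 else - B i) = 0)"
  and CH: "\<And>p q. p \<le> q \<Longrightarrow> hv p \<Longrightarrow> \<not> hv q \<Longrightarrow>
      a1 * (\<Sum>i\<in>{p..<q+1}. if hv i then 0 else 1) \<le> a2 * (\<Sum>i\<in>{p..<q+1}. if hv i then 1 else 0) + a1 - 1"
begin

definition c :: "int \<Rightarrow> int" where "c i = (if hv i then -1 else B i)"
definition f :: "int \<Rightarrow> int" where "f i = (if hv i then - A i else 1)"
definition D :: "int \<Rightarrow> int \<Rightarrow> int" where "D x y = (\<Sum>i\<in>{x+1..<y+1}. c i)"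
definition inH2 :: "int \<Rightarrow> bool" where "inH2 h \<longleftrightarrow> hv h \<and> (\<exists>v. h < v \<and> v < h + N \<and> 0 < D h v)"
definition vv :: "int \<Rightarrow> int" where "vv h = h + int (LEAST k::nat. 0 < k \<and> 0 < D h (h + int k))"

lemma c_per: "c (i + N) = c i" unfolding c_def using hv_per B_per by simp

lemma D_self: "D x x = 0" unfolding D_def by simp

lemma D_add: "x \<le> y \<Longrightarrow> y \<le> z \<Longrightarrow> D x z = D x y + D y z"
  unfolding D_def using isum_split[of "x+1" "y+1" "z+1" c] by simp

lemma D_last: "x \<le> y \<Longrightarrow> D x (y + 1) = D x y + c (y + 1)"
  unfolding D_def using isum_last[of "x+1" "y+1" c] by simp

lemma D_per: "D (x + N) (y + N) = D x y"
proof -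
  have "D x y = (\<Sum>i\<in>{x+1..<y+1}. c (i + N))" unfolding D_def using c_per by simp
  also have "\<dots> = D (x + N) (y + N)" unfolding D_def by (subst isum_shift) (simp add: algebra_simps)
  finally show ?thesis by simp
qed

lemma D_full: "D x (x + N) = (\<Sum>i\<in>{0..<N}. c i)"
  unfolding D_def using per_sum[of c N "x+1"] c_per Npos by (simp add: algebra_simps)

lemma inH2_hv: "inH2 h \<Longrightarrow> hv h" unfolding inH2_def by simp

lemma inH2_per: "inH2 (h + N) = inH2 h"
proof
  assume "inH2 (h + N)"
  then obtain v where v: "hv (h + N)" "h + N < v" "v < h + N + N" "0 < D (h + N) v" unfolding inH2_def by blast
  have "D (h + N) v = D h (v - N)" using D_per[of h "v - N"] by simp
  then show "inH2 h" unfolding inH2_def using v hv_per by (intro conjI exI[of _ "v - N"]) auto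
next
  assume "inH2 h"
  then obtain v where v: "hv h" "h < v" "v < h + N" "0 < D h v" unfolding inH2_def by blast
  then show "inH2 (h + N)" unfolding inH2_def using D_per[of h v] hv_per
    by (intro conjI exI[of _ "v + N"]) auto
qed

lemma vv_per: "vv (h + N) = vv h + N"
proof -
  have "\<And>k. D (h + N) (h + N + int k) = D h (h + int k)"
  proof -
    fix k
    have "h + N + int k = (h + int k) + N" by simp
    then show "D (h + N) (h + N + int k) = D h (h + int k)" using D_per[of h "h + int k"] by metis
  qed
  then show ?thesis unfolding vv_def by simp
qed

lemma vv_props:
  assumes "inH2 h"
  shows "h < vv h" "vv h < h + N" "0 < D h (vv h)" "\<And>x. h \<le> x \<Longrightarrow> x < vv h \<Longrightarrow> D h x \<le> 0"
proof -
  obtain v where v: "h < v" "v < h + N" "0 < D h v" using assms unfolding inH2_def by blast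
  let ?P = "\<lambda>k::nat. 0 < k \<and> 0 < D h (h + int k)"
  have Pv: "?P (nat (v - h))" using v by simp
  have PL: "?P (LEAST k. ?P k)" by (rule LeastI[of ?P, OF Pv])
  have Lle: "(LEAST k. ?P k) \<le> nat (v - h)" by (rule Least_le[of ?P, OF Pv])
  show "h < vv h" using PL unfolding vv_def by simp
  show "vv h < h + N" using Lle v unfolding vv_def by linarith
  show "0 < D h (vv h)" using PL unfolding vv_def by simp
  fix x assume x: "h \<le> x" "x < vv h"
  show "D h x \<le> 0"
  proof (cases "x = h")
    case True then show ?thesis by (simp add: D_self)
  next
    case False
    have "nat (x - h) < (LEAST k. ?P k)" using x unfolding vv_def by linarith
    then have "\<not> ?P (nat (x - h))" by (rule not_less_Least)
    then show ?thesis using False x by simp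
  qed
qed

lemma vv_V: assumes "inH2 h" shows "\<not> hv (vv h)"
proof -
  have "D h (vv h) = D h (vv h - 1) + c (vv h)"
    using D_last[of h "vv h - 1"] vv_props[OF assms] by simp
  moreover have "D h (vv h - 1) \<le> 0" using vv_props[OF assms] by simp
  ultimately have "0 < c (vv h)" using vv_props(3)[OF assms] by simp
  then show ?thesis unfolding c_def by (auto split: if_splits)
qed

lemma K2:
  assumes "inH2 h" "h < h'" "h' < vv h" "hv h'"
  shows "inH2 h'" "vv h' \<le> vv h"
proof -
  have "D h (vv h) = D h h' + D h' (vv h)" using D_add[of h h' "vv h"] assms by simp
  moreover have "D h h' \<le> 0" using vv_props(4)[OF assms(1)] assms by simp
  ultimately have pos: "0 < D h' (vv h)" using vv_props(3)[OF assms(1)] by simp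
  show "inH2 h'" unfolding inH2_def using assms vv_props(2)[OF assms(1)] pos
    by (intro conjI exI[of _ "vv h"]) auto
  let ?P = "\<lambda>k::nat. 0 < k \<and> 0 < D h' (h' + int k)"
  have "?P (nat (vv h - h'))" using pos assms by simp
  then have "(LEAST k. ?P k) \<le> nat (vv h - h')" by (rule Least_le)
  then have "int (LEAST k. ?P k) \<le> vv h - h'" using assms(3) by linarith
  then show "vv h' \<le> vv h" by (simp add: vv_def[of h'])
qed

lemma K3:
  assumes "inH2 h"
  shows "\<exists>e. h \<le> e \<and> e < vv h \<and> (\<Sum>i\<in>{h..<e+1}. f i) = 0"
proof -
  let ?m = "vv h - h"
  have cp: "(\<exists>e. h \<le> e \<and> e < h + ?m \<and> (\<Sum>i\<in>{h..<e+1}. if hv i then - A i else 1) = 0)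
    \<or> (\<exists>e. h < e \<and> e \<le> h + ?m \<and> (\<Sum>i\<in>{e..<h+?m+1}. if hv i then 1 else - B i) = 0)"
    using CP[of h ?m] inH2_hv[OF assms] vv_V[OF assms] vv_props[OF assms] by simp
  have "\<not> (\<exists>e. h < e \<and> e \<le> h + ?m \<and> (\<Sum>i\<in>{e..<h+?m+1}. if hv i then 1 else - B i) = 0)"
  proof
    assume "\<exists>e. h < e \<and> e \<le> h + ?m \<and> (\<Sum>i\<in>{e..<h+?m+1}. if hv i then 1 else - B i) = 0"
    then obtain e where e: "h < e" "e \<le> vv h" "(\<Sum>i\<in>{e..<vv h+1}. if hv i then 1 else - B i) = 0" by auto
    have "(\<Sum>i\<in>{e..<vv h+1}. if hv i then 1 else - B i) = - (\<Sum>i\<in>{e..<vv h+1}. c i)"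
      unfolding c_def sum_negf[symmetric] by (rule sum.cong) auto
    also have "(\<Sum>i\<in>{e..<vv h+1}. c i) = D (e - 1) (vv h)" unfolding D_def by simp
    finally have z: "D (e - 1) (vv h) = 0" using e by simp
    have "D h (vv h) = D h (e - 1) + D (e - 1) (vv h)" using D_add[of h "e - 1" "vv h"] e by simp
    moreover have "D h (e - 1) \<le> 0" using vv_props(4)[OF assms, of "e - 1"] e by simp
    ultimately show False using z vv_props(3)[OF assms] by simp
  qed
  then show ?thesis using cp unfolding f_def by auto
qed

lemma BI:
  assumes "inH2 h0"
  shows "a1 * (\<Sum>i\<in>{h0..<vv h0+1}. A i) \<le> a2 * (\<Sum>i\<in>{h0..<vv h0+1}. if hv i then 1 else 0) - 1"
proof -
  let ?v = "vv h0"
  have hv0: "h0 < ?v" using vv_props[OF assms] by simp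
  have "0 \<le> (\<Sum>k\<in>{h0..<?v}. f k)"
  proof (rule block_sum)
    fix i assume i: "h0 \<le> i" "i < ?v"
    show "\<exists>j. i \<le> j \<and> j < ?v \<and> 0 \<le> (\<Sum>k\<in>{i..<j+1}. f k)"
    proof (cases "hv i")
      case False
      then show ?thesis using i by (intro exI[of _ i]) (simp add: f_def atLeastLessThanPlusOne_atLeastAtMost_int)
    next
      case True
      have hi: "inH2 i \<and> vv i \<le> ?v"
      proof (cases "i = h0")
        case True then show ?thesis using assms by simp
      next
        case False then show ?thesis using K2[OF assms, of i] i \<open>hv i\<close> by simp
      qed
      then obtain e where "i \<le> e" "e < vv i" "(\<Sum>k\<in>{i..<e+1}. f k) = 0" using K3 by blast
      then show ?thesis using hi by (intro exI[of _ e]) simp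
    qed
  qed (use hv0 in simp)
  moreover have "(\<Sum>k\<in>{h0..<?v}. f k) = (\<Sum>k\<in>{h0..<?v}. if hv k then 0 else 1) - (\<Sum>k\<in>{h0..<?v}. A k)"
    unfolding f_def using A_off by (auto simp: sum_subtractf[symmetric] intro!: sum.cong)
  ultimately have s1: "(\<Sum>k\<in>{h0..<?v}. A k) \<le> (\<Sum>k\<in>{h0..<?v}. if hv k then 0 else 1)" by simp
  have eA: "(\<Sum>k\<in>{h0..<?v+1}. A k) = (\<Sum>k\<in>{h0..<?v}. A k)"
    using isum_last[of h0 ?v A] hv0 A_off[OF vv_V[OF assms]] by simp
  have eV: "(\<Sum>k\<in>{h0..<?v+1}. if hv k then 0 else 1) = (\<Sum>k\<in>{h0..<?v}. if hv k then 0 else 1) + (1::int)"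
    using isum_last[of h0 ?v "\<lambda>k. if hv k then 0 else (1::int)"] hv0 vv_V[OF assms] by simp
  have ch: "a1 * (\<Sum>i\<in>{h0..<?v+1}. if hv i then 0 else 1) \<le> a2 * (\<Sum>i\<in>{h0..<?v+1}. if hv i then 1 else 0) + a1 - 1"
    using CH[of h0 ?v] hv0 inH2_hv[OF assms] vv_V[OF assms] by simp
  have a1nn: "0 \<le> a1" unfolding a1_eq by (rule sum_nonneg) simp
  have "a1 * (\<Sum>k\<in>{h0..<?v+1}. A k) \<le> a1 * ((\<Sum>k\<in>{h0..<?v+1}. if hv k then 0 else 1) - 1)"
    using s1 eA eV a1nn by (simp add: mult_left_mono)
  then show ?thesis using ch by (simp add: algebra_simps)
qed

end

context gen begin

lemma inH2_mod: "inH2 (h mod N) = inH2 h"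
  by (rule per_mod[where \<phi>=inH2]) (rule inH2_per)

lemma len_mod: "vv (h mod N) - h mod N = vv h - h"
  by (rule per_mod[where \<phi>="\<lambda>h. vv h - h"]) (simp add: vv_per)

lemma cut_exists: "\<exists>c0. \<forall>h. c0 \<le> h \<longrightarrow> h < c0 + N \<longrightarrow> inH2 h \<longrightarrow> vv h < c0 + N"
proof (cases "\<exists>h\<in>{0..<N}. inH2 h")
  case False
  have "\<And>h. \<not> inH2 h"
  proof -
    fix h
    have "h mod N \<in> {0..<N}" using Npos by simp
    then show "\<not> inH2 h" using False inH2_mod[of h] by blast
  qed
  then show ?thesis by blast
next
  case True
  define S where "S = {h\<in>{0..<N}. inH2 h}"
  have fS: "finite S" "S \<noteq> {}"
    unfolding S_def by (rule finite_subset[of _ "{0..<N}"], auto) (use True in auto)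
  define M where "M = Max ((\<lambda>h. vv h - h) ` S)"
  have "M \<in> (\<lambda>h. vv h - h) ` S" unfolding M_def using fS by (intro Max_in) auto
  then obtain h0 where h0: "h0 \<in> S" "vv h0 - h0 = M" by blast
  have maxl: "\<And>h. inH2 h \<Longrightarrow> vv h - h \<le> vv h0 - h0"
  proof -
    fix h assume "inH2 h"
    then have "h mod N \<in> S" unfolding S_def using Npos inH2_mod[of h] by simp
    then have "vv (h mod N) - h mod N \<le> M" unfolding M_def using fS by (intro Max_ge) auto
    then show "vv h - h \<le> vv h0 - h0" using len_mod[of h] h0 by simp
  qed
  have i0: "inH2 h0" using h0 unfolding S_def by simp
  have i1: "inH2 (h0 + N)" using i0 inH2_per by simp
  have v1: "vv (h0 + N) = vv h0 + N" by (rule vv_per)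
  show ?thesis
  proof (intro exI[of _ "vv h0 + 1"] allI impI)
    fix h assume h: "vv h0 + 1 \<le> h" "h < vv h0 + 1 + N" "inH2 h"
    show "vv h < vv h0 + 1 + N"
    proof (rule ccontr)
      assume c: "\<not> vv h < vv h0 + 1 + N"
      consider "h < h0 + N" | "h = h0 + N" | "h0 + N < h" by linarith
      then show False
      proof cases
        case 1
        then have "vv h - h > vv h0 - h0" using c by linarith
        then show False using maxl[OF h(3)] by simp
      next
        case 2
        then show False using c v1 by simp
      next
        case 3
        have "h \<noteq> vv (h0 + N)" using inH2_hv[OF h(3)] vv_V[OF i1] by auto
        then have "h < vv (h0 + N)" using h(2) v1 by simp
        then have "vv h \<le> vv (h0 + N)" using K2(2)[OF i1 3 _ inH2_hv[OF h(3)]] by simp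
        then show False using c v1 by simp
      qed
    qed
  qed
qed

lemma decomp:
  assumes cut: "\<forall>h. c0 \<le> h \<longrightarrow> h < c0 + N \<longrightarrow> inH2 h \<longrightarrow> vv h < c0 + N"
  shows "c0 \<le> x \<Longrightarrow> x \<le> c0 + N \<Longrightarrow>
    a1 * (\<Sum>h\<in>{x..<c0+N}. if inH2 h then A h else 0)
      + (if \<exists>h. x \<le> h \<and> h < c0 + N \<and> inH2 h then 1 else 0)
    \<le> a2 * (\<Sum>h\<in>{x..<c0+N}. if inH2 h then 1 else 0)"
proof (induction "nat (c0 + N - x)" arbitrary: x rule: less_induct)
  case less
  let ?E = "c0 + N"
  show ?case
  proof (cases "x = ?E")
    case True then show ?thesis by simp
  next
    case False
    then have xE: "x < ?E" using less.prems by simp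
    show ?thesis
    proof (cases "inH2 x")
      case False
      have IH: "a1 * (\<Sum>h\<in>{x+1..<?E}. if inH2 h then A h else 0)
          + (if \<exists>h. x + 1 \<le> h \<and> h < ?E \<and> inH2 h then 1 else 0)
        \<le> a2 * (\<Sum>h\<in>{x+1..<?E}. if inH2 h then 1 else 0)"
        using less.hyps[of "x+1"] less.prems xE by simp
      have e1: "(\<Sum>h\<in>{x..<?E}. if inH2 h then A h else 0) = (\<Sum>h\<in>{x+1..<?E}. if inH2 h then A h else 0)"
        using isum_first[of x ?E "\<lambda>h. if inH2 h then A h else 0"] xE False by simp
      have e2: "(\<Sum>h\<in>{x..<?E}. if inH2 h then 1 else 0) = (\<Sum>h\<in>{x+1..<?E}. if inH2 h then (1::int) else 0)"
        using isum_first[of x ?E "\<lambda>h. if inH2 h then (1::int) else 0"] xE False by simp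
      have e3: "(\<exists>h. x \<le> h \<and> h < ?E \<and> inH2 h) = (\<exists>h. x + 1 \<le> h \<and> h < ?E \<and> inH2 h)"
      proof
        assume "\<exists>h. x \<le> h \<and> h < ?E \<and> inH2 h"
        then obtain h where h: "x \<le> h" "h < ?E" "inH2 h" by blast
        then have "h \<noteq> x" using False by blast
        then show "\<exists>h. x + 1 \<le> h \<and> h < ?E \<and> inH2 h" using h by (intro exI[of _ h]) simp
      next
        assume "\<exists>h. x + 1 \<le> h \<and> h < ?E \<and> inH2 h"
        then obtain h where "x + 1 \<le> h" "h < ?E" "inH2 h" by blast
        then show "\<exists>h. x \<le> h \<and> h < ?E \<and> inH2 h" by (intro exI[of _ h]) simp
      qed
      show ?thesis using IH e1 e2 e3 by simp
    next
      case True
      let ?v = "vv x"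
      have xv: "x < ?v" "?v < ?E" using vv_props(1)[OF True] cut less.prems xE True by auto
      have IH: "a1 * (\<Sum>h\<in>{?v+1..<?E}. if inH2 h then A h else 0)
          + (if \<exists>h. ?v + 1 \<le> h \<and> h < ?E \<and> inH2 h then 1 else 0)
        \<le> a2 * (\<Sum>h\<in>{?v+1..<?E}. if inH2 h then 1 else 0)"
        using less.hyps[of "?v+1"] less.prems xv by simp
      have eq: "\<And>h. h \<in> {x..<?v+1} \<Longrightarrow> inH2 h = hv h"
      proof -
        fix h assume h: "h \<in> {x..<?v+1}"
        show "inH2 h = hv h"
        proof (cases "h = x")
          case True then show ?thesis using \<open>inH2 x\<close> inH2_hv by auto
        next
          case False
          show ?thesis
          proof (cases "h = ?v")
            case True then show ?thesis using vv_V[OF \<open>inH2 x\<close>] inH2_hv by auto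
          next
            case False
            then show ?thesis using \<open>h \<noteq> x\<close> h K2(1)[OF \<open>inH2 x\<close>, of h] inH2_hv by auto
          qed
        qed
      qed
      have s1: "(\<Sum>h\<in>{x..<?v+1}. if inH2 h then A h else 0) = (\<Sum>h\<in>{x..<?v+1}. A h)"
        using eq A_off by (intro sum.cong) auto
      have s2: "(\<Sum>h\<in>{x..<?v+1}. if inH2 h then 1 else 0) = (\<Sum>h\<in>{x..<?v+1}. if hv h then (1::int) else 0)"
        using eq by (intro sum.cong) auto
      have bi: "a1 * (\<Sum>i\<in>{x..<?v+1}. A i) \<le> a2 * (\<Sum>i\<in>{x..<?v+1}. if hv i then 1 else 0) - 1"
        by (rule BI[OF True])
      have sp1: "(\<Sum>h\<in>{x..<?E}. if inH2 h then A h else 0) = (\<Sum>h\<in>{x..<?v+1}. if inH2 h then A h else 0) + (\<Sum>h\<in>{?v+1..<?E}. if inH2 h then A h else 0)"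
        using isum_split[of x "?v+1" ?E] xv by simp
      have sp2: "(\<Sum>h\<in>{x..<?E}. if inH2 h then 1 else 0) = (\<Sum>h\<in>{x..<?v+1}. if inH2 h then 1 else 0) + (\<Sum>h\<in>{?v+1..<?E}. if inH2 h then (1::int) else 0)"
        using isum_split[of x "?v+1" ?E] xv by simp
      have ex: "\<exists>h. x \<le> h \<and> h < ?E \<and> inH2 h" using True xE by auto
      have fl: "0 \<le> (if \<exists>h. ?v + 1 \<le> h \<and> h < ?E \<and> inH2 h then 1 else (0::int))" by simp
      show ?thesis using IH bi sp1 sp2 s1 s2 ex fl by (simp add: algebra_simps)
    qed
  qed
qed

definition T :: int where "T = (\<Sum>i\<in>{0..<N}. c i)"

lemma free_step:
  assumes fr: "hv h" "\<not> inH2 h" and v: "h < v" "v \<le> h + N" "hv v"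
  shows "D h v \<le> -1"
proof -
  have "D h v = D h (v - 1) + c v" using D_last[of h "v - 1"] v by simp
  moreover have "D h (v - 1) \<le> 0"
  proof (cases "v - 1 = h")
    case True then show ?thesis by (simp add: D_self)
  next
    case False
    have all: "\<forall>v'. h < v' \<longrightarrow> v' < h + N \<longrightarrow> D h v' \<le> 0"
      using fr unfolding inH2_def by (meson not_less)
    have "h < v - 1" "v - 1 < h + N" using False v by auto
    then show ?thesis using all by blast
  qed
  ultimately show ?thesis using v unfolding c_def by simp
qed

lemma Q_shift: "0 \<le> h \<Longrightarrow> D 0 (h + N) = T + D 0 h"
proof -
  assume h: "0 \<le> h"
  have "D 0 (h + N) = D 0 N + D N (h + N)" using D_add[of 0 N "h + N"] h Npos by simp
  moreover have "D N (h + N) = D 0 h" using D_per[of 0 h] by simp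
  moreover have "D 0 N = T" using D_full[of 0] unfolding T_def by simp
  ultimately show ?thesis by simp
qed

lemma card_free: "int (card {h\<in>{0..<N}. hv h \<and> \<not> inH2 h}) \<le> max 0 (- T)"
proof (cases "{h\<in>{0..<N}. hv h \<and> \<not> inH2 h} = {}")
  case True then show ?thesis unfolding True by simp
next
  case False
  define Fr where "Fr = {h\<in>{0..<N}. hv h \<and> \<not> inH2 h}"
  have fin: "finite Fr" unfolding Fr_def by (rule finite_subset[of _ "{0..<N}"]) auto
  define h1 where "h1 = Min Fr"
  have h1: "h1 \<in> Fr" unfolding h1_def using fin False Fr_def by (intro Min_in) auto
  have h1le: "\<And>h. h \<in> Fr \<Longrightarrow> h1 \<le> h" unfolding h1_def using fin by simp
  have h1p: "0 \<le> h1" "h1 < N" "hv h1" "\<not> inH2 h1" using h1 unfolding Fr_def by auto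
  have T1: "T \<le> -1"
  proof -
    have "D h1 (h1 + N) \<le> -1" using free_step[of h1 "h1 + N"] h1p Npos hv_per by simp
    then show ?thesis using D_full[of h1] unfolding T_def by simp
  qed
  let ?Q = "\<lambda>h. D 0 h"
  have dec: "\<And>h h'. h \<in> Fr \<Longrightarrow> h' \<in> Fr \<Longrightarrow> h < h' \<Longrightarrow> ?Q h' \<le> ?Q h - 1 \<and> ?Q h + T + 1 \<le> ?Q h'"
  proof -
    fix h h' assume a: "h \<in> Fr" "h' \<in> Fr" "h < h'"
    have p: "0 \<le> h" "h < N" "hv h" "\<not> inH2 h" "0 \<le> h'" "h' < N" "hv h'" "\<not> inH2 h'"
      using a unfolding Fr_def by auto
    have "D h h' \<le> -1" using free_step[of h h'] p a(3) by simp
    moreover have "?Q h' = ?Q h + D h h'" using D_add[of 0 h h'] p a(3) by simp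
    moreover have "D h' (h + N) \<le> -1" using free_step[of h' "h + N"] p a(3) hv_per by simp
    moreover have "D 0 (h + N) = ?Q h' + D h' (h + N)" using D_add[of 0 h' "h + N"] p by simp
    moreover have "D 0 (h + N) = T + ?Q h" using Q_shift p by simp
    ultimately show "?Q h' \<le> ?Q h - 1 \<and> ?Q h + T + 1 \<le> ?Q h'" by simp
  qed
  have inj: "inj_on ?Q Fr"
  proof (rule inj_onI)
    fix h h' assume a: "h \<in> Fr" "h' \<in> Fr" "?Q h = ?Q h'"
    show "h = h'"
    proof (rule ccontr)
      assume "h \<noteq> h'"
      then consider "h < h'" | "h' < h" by linarith
      then show False using dec[of h h'] dec[of h' h] a by cases auto
    qed
  qed
  have sub: "?Q ` Fr \<subseteq> {?Q h1 + T + 1 .. ?Q h1}"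
  proof
    fix y assume "y \<in> ?Q ` Fr"
    then obtain h where h: "h \<in> Fr" "y = ?Q h" by blast
    show "y \<in> {?Q h1 + T + 1 .. ?Q h1}"
    proof (cases "h = h1")
      case True then show ?thesis using h T1 by simp
    next
      case False
      then have "h1 < h" using h1le[OF h(1)] by simp
      then show ?thesis using dec[OF h1 h(1)] h by auto
    qed
  qed
  have "card Fr \<le> card {?Q h1 + T + 1 .. ?Q h1}" by (rule card_inj_on_le[OF inj sub]) simp
  then have "card Fr \<le> nat (- T)" by simp
  then show ?thesis unfolding Fr_def using T1 by linarith
qed

lemma sum_ind_card: "(\<Sum>h\<in>S. if P h then 1 else (0::int)) = int (card {h\<in>S. P h})" if "finite S"
  using that by (simp add: sum.If_cases Int_def)

theorem mainL:
  assumes a1p: "0 < a1" and s2p: "0 < (\<Sum>i\<in>{0..<N}. B i)"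
  shows "\<exists>m. min (\<Sum>i\<in>{0..<N}. B i) a1 \<le> m \<and> m \<le> a1 \<and>
     a1 * (\<Sum>i\<in>{0..<N}. A i) \<le> d1 * a1 * (a1 - m) + a2 * m - 1"
proof -
  define s2 where "s2 = (\<Sum>i\<in>{0..<N}. B i)"
  define s1 where "s1 = (\<Sum>i\<in>{0..<N}. A i)"
  define m where "m = (\<Sum>h\<in>{0..<N}. if inH2 h then 1 else (0::int))"
  define \<sigma> where "\<sigma> = (\<Sum>h\<in>{0..<N}. if inH2 h then A h else 0)"
  define fr where "fr = (\<Sum>h\<in>{0..<N}. if hv h \<and> \<not> inH2 h then 1 else (0::int))"
  have Tval: "T = s2 - a1"
  proof -
    have "T = (\<Sum>i\<in>{0..<N}. B i - (if hv i then 1 else 0))"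
      unfolding T_def c_def using B_off by (intro sum.cong) auto
    then show ?thesis unfolding s2_def a1_eq by (simp add: sum_subtractf)
  qed
  have frc: "fr \<le> max 0 (a1 - s2)"
    using card_free Tval unfolding fr_def by (simp add: sum_ind_card)
  have mfr: "m + fr = a1"
  proof -
    have "m + fr = (\<Sum>h\<in>{0..<N}. (if inH2 h then 1 else 0) + (if hv h \<and> \<not> inH2 h then 1 else (0::int)))"
      unfolding m_def fr_def by (simp add: sum.distrib)
    also have "\<dots> = a1" unfolding a1_eq using inH2_hv by (intro sum.cong) auto
    finally show ?thesis .
  qed
  have frnn: "0 \<le> fr" unfolding fr_def by (rule sum_nonneg) simp
  have mlow: "min s2 a1 \<le> m" using frc mfr by linarith
  have mpos: "0 < m" using mlow a1p s2p unfolding s2_def by linarith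
  have s1split: "s1 = \<sigma> + (\<Sum>h\<in>{0..<N}. if hv h \<and> \<not> inH2 h then A h else 0)"
    unfolding s1_def \<sigma>_def using A_off inH2_hv by (auto simp: sum.distrib[symmetric] intro!: sum.cong)
  have frA: "(\<Sum>h\<in>{0..<N}. if hv h \<and> \<not> inH2 h then A h else 0) \<le> d1 * fr"
  proof -
    have "(\<Sum>h\<in>{0..<N}. if hv h \<and> \<not> inH2 h then A h else 0) \<le> (\<Sum>h\<in>{0..<N}. d1 * (if hv h \<and> \<not> inH2 h then 1 else 0))"
      using A_le A_nn by (intro sum_mono) auto
    then show ?thesis unfolding fr_def by (simp add: sum_distrib_left)
  qed
  obtain c0 where cut: "\<forall>h. c0 \<le> h \<longrightarrow> h < c0 + N \<longrightarrow> inH2 h \<longrightarrow> vv h < c0 + N"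
    using cut_exists by blast
  have dc: "a1 * (\<Sum>h\<in>{c0..<c0+N}. if inH2 h then A h else 0)
      + (if \<exists>h. c0 \<le> h \<and> h < c0 + N \<and> inH2 h then 1 else 0)
    \<le> a2 * (\<Sum>h\<in>{c0..<c0+N}. if inH2 h then 1 else 0)"
    using decomp[OF cut, of c0] Npos by simp
  have e1: "(\<Sum>h\<in>{c0..<c0+N}. if inH2 h then A h else 0) = \<sigma>"
    unfolding \<sigma>_def by (rule per_sum) (simp_all add: inH2_per A_per Npos less_imp_le)
  have e2: "(\<Sum>h\<in>{c0..<c0+N}. if inH2 h then 1 else 0) = m"
    unfolding m_def by (rule per_sum) (simp_all add: inH2_per Npos less_imp_le)
  have ex: "\<exists>h. c0 \<le> h \<and> h < c0 + N \<and> inH2 h"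
  proof (rule ccontr)
    assume "\<not> ?thesis"
    then have "(\<Sum>h\<in>{c0..<c0+N}. if inH2 h then 1 else (0::int)) = 0" by (intro sum.neutral) auto
    then show False using e2 mpos by simp
  qed
  have key: "a1 * \<sigma> + 1 \<le> a2 * m" using dc e1 e2 ex by simp
  have a1nn: "0 \<le> a1" using a1p by simp
  have "a1 * s1 \<le> a1 * \<sigma> + a1 * (d1 * fr)" using s1split frA a1nn
    by (simp add: distrib_left mult_left_mono)
  also have "\<dots> \<le> a2 * m - 1 + d1 * a1 * (a1 - m)"
  proof -
    have "fr = a1 - m" using mfr by simp
    then have "a1 * (d1 * fr) = d1 * a1 * (a1 - m)" by simp
    then show ?thesis using key by linarith
  qed
  finally show ?thesis using mlow mfr frnn unfolding s1_def s2_def by (intro exI[of _ m]) simp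
qed

end

lemma neg_per_sum:
  fixes \<phi> :: "int \<Rightarrow> 'b::ab_group_add"
  assumes "\<And>i. \<phi> (i + N) = \<phi> i" "0 \<le> N"
  shows "(\<Sum>i\<in>{0..<N}. \<phi> (- i)) = (\<Sum>i\<in>{0..<N}. \<phi> i)"
proof -
  have "(\<Sum>i\<in>{0..<N}. \<phi> (- i)) = (\<Sum>i\<in>{1-N..<1}. \<phi> i)" by (simp add: isum_neg)
  also have "\<dots> = (\<Sum>i\<in>{(1-N)..<(1-N)+N}. \<phi> i)" by simp
  also have "\<dots> = (\<Sum>i\<in>{0..<N}. \<phi> i)" by (rule per_sum[where \<phi>=\<phi> and N=N, OF assms])
  finally show ?thesis .
qed

context gen begin

lemma hv_mod: "hv (x mod N) = hv x" by (rule per_mod[where \<phi>=hv]) (rule hv_per)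
lemma A_mod: "A (x mod N) = A x" by (rule per_mod[where \<phi>=A]) (rule A_per)
lemma B_mod: "B (x mod N) = B x" by (rule per_mod[where \<phi>=B]) (rule B_per)

lemma run_bound:
  assumes run: "\<And>v j. \<not> hv v \<Longrightarrow> 1 \<le> j \<Longrightarrow> j \<le> B v \<Longrightarrow> hv (v - j)"
  shows "(\<Sum>i\<in>{0..<N}. A i) \<le> d1 * (a1 - (\<Sum>i\<in>{0..<N}. B i))"
proof -
  have BltN: "\<And>v. \<not> hv v \<Longrightarrow> B v < N"
  proof (rule ccontr)
    fix v assume v: "\<not> hv v" "\<not> B v < N"
    then have "hv (v - N)" using run[of v N] Npos by simp
    moreover have "hv (v - N + N) = hv (v - N)" by (rule hv_per)
    ultimately show False using v by simp
  qed
  have Az: "\<And>v j. \<not> hv v \<Longrightarrow> 1 \<le> j \<Longrightarrow> j \<le> B v \<Longrightarrow> A (v - j) = 0"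
  proof -
    fix v j assume vj: "\<not> hv v" "1 \<le> j" "j \<le> B v"
    let ?h = "v - j"
    have allH: "\<And>i. ?h \<le> i \<Longrightarrow> i < v \<Longrightarrow> hv i"
    proof -
      fix i assume "?h \<le> i" "i < v"
      then show "hv i" using run[of v "v - i"] vj by simp
    qed
    have cp: "(\<exists>e. ?h \<le> e \<and> e < ?h + j \<and> (\<Sum>i\<in>{?h..<e+1}. if hv i then - A i else 1) = 0)
      \<or> (\<exists>e. ?h < e \<and> e \<le> ?h + j \<and> (\<Sum>i\<in>{e..<?h+j+1}. if hv i then 1 else - B i) = 0)"
      using CP[of ?h j] allH[of ?h] vj BltN[of v] by simp
    show "A ?h = 0"
    proof (cases "\<exists>e. ?h \<le> e \<and> e < ?h + j \<and> (\<Sum>i\<in>{?h..<e+1}. if hv i then - A i else 1) = 0")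
      case True
      then obtain e where e: "?h \<le> e" "e < v" "(\<Sum>i\<in>{?h..<e+1}. if hv i then - A i else 1) = 0" by auto
      have "(\<Sum>i\<in>{?h..<e+1}. if hv i then - A i else 1) = - (\<Sum>i\<in>{?h..<e+1}. A i)"
        unfolding sum_negf[symmetric] using allH e by (intro sum.cong) auto
      then have s0: "(\<Sum>i\<in>{?h..<e+1}. A i) = 0" using e by simp
      have "A ?h \<le> (\<Sum>i\<in>{?h..<e+1}. A i)"
        using e A_nn by (intro member_le_sum) auto
      then show ?thesis using s0 A_nn[of ?h] by simp
    next
      case False
      then obtain e where e: "?h < e" "e \<le> v" "(\<Sum>i\<in>{e..<v+1}. if hv i then 1 else - B i) = 0" using cp by auto
      have "(\<Sum>i\<in>{e..<v+1}. if hv i then 1 else - B i) = (\<Sum>i\<in>{e..<v}. if hv i then 1 else - B i) - B v"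
        using isum_last[of e v "\<lambda>i. if hv i then 1 else - B i"] e vj by simp
      also have "(\<Sum>i\<in>{e..<v}. if hv i then 1 else - B i) = (\<Sum>i\<in>{e..<v}. 1)"
        using allH e by (intro sum.cong) auto
      also have "\<dots> = v - e" using e by simp
      finally show ?thesis using e vj by simp
    qed
  qed
  define V where "V = {v\<in>{0..<N}. \<not> hv v}"
  define Z where "Z = Sigma V (\<lambda>v. {1..B v})"
  define Z0 where "Z0 = {h\<in>{0..<N}. hv h \<and> A h = 0}"
  have finV: "finite V" unfolding V_def by (rule finite_subset[of _ "{0..<N}"]) auto
  have cardZ: "int (card Z) = (\<Sum>i\<in>{0..<N}. B i)"
  proof -
    have "card Z = (\<Sum>v\<in>V. card {1..B v})" unfolding Z_def using finV by (simp add: card_SigmaI)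
    then have "int (card Z) = (\<Sum>v\<in>V. B v)" using B_nn by simp
    also have "\<dots> = (\<Sum>v\<in>{0..<N}. B v)"
      unfolding V_def by (rule sum.mono_neutral_left) (auto simp: B_off)
    finally show ?thesis .
  qed
  let ?\<psi> = "\<lambda>p. (fst p - snd p) mod N"
  have img: "?\<psi> ` Z \<subseteq> Z0"
  proof
    fix y assume "y \<in> ?\<psi> ` Z"
    then obtain v j where vj: "v \<in> V" "1 \<le> j" "j \<le> B v" "y = (v - j) mod N" unfolding Z_def by auto
    have "\<not> hv v" using vj unfolding V_def by simp
    then show "y \<in> Z0" unfolding Z0_def using vj run Az hv_mod A_mod Npos by auto
  qed
  have inj: "inj_on ?\<psi> Z"
  proof -
    have key: "\<And>v j v' j'. v \<in> V \<Longrightarrow> 1 \<le> j \<Longrightarrow> j \<le> B v \<Longrightarrow> v' \<in> V \<Longrightarrow> 1 \<le> j' \<Longrightarrow> j' \<le> B v'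
        \<Longrightarrow> (v - j) mod N = (v' - j') mod N \<Longrightarrow> j \<le> j' \<Longrightarrow> v = v' \<and> j = j'"
    proof -
      fix v j v' j' assume a: "v \<in> V" "1 \<le> j" "j \<le> B v" "v' \<in> V" "1 \<le> j'" "j' \<le> B v'"
        "(v - j) mod N = (v' - j') mod N" "j \<le> j'"
      have cong: "(v - j + j) mod N = (v' - j' + j) mod N" using a(7) by (rule mod_add_cong) simp
      have jj: "j = j'"
      proof (rule ccontr)
        assume "j \<noteq> j'"
        then have "1 \<le> j' - j" "j' - j \<le> B v'" using a by auto
        then have "hv (v' - (j' - j))" using run[of v'] a(4) unfolding V_def by simp
        then have h1: "hv (v' - j' + j)" by (simp add: algebra_simps)
        have cong': "v mod N = (v' - j' + j) mod N" using cong by simp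
        have "hv v" using h1 cong' by (metis hv_mod)
        then show False using a(1) unfolding V_def by simp
      qed
      then have "v mod N = v' mod N" using cong by simp
      then show "v = v' \<and> j = j'" using a(1,4) jj unfolding V_def by simp
    qed
    show ?thesis
    proof (rule inj_onI)
      fix p q assume pq: "p \<in> Z" "q \<in> Z" "?\<psi> p = ?\<psi> q"
      obtain v j where p: "p = (v, j)" "v \<in> V" "1 \<le> j" "j \<le> B v" using pq(1) unfolding Z_def by auto
      obtain v' j' where q: "q = (v', j')" "v' \<in> V" "1 \<le> j'" "j' \<le> B v'" using pq(2) unfolding Z_def by auto
      have e: "(v - j) mod N = (v' - j') mod N" using pq(3) p q by simp
      show "p = q"
      proof (cases "j \<le> j'")
        case True then show ?thesis using key[OF p(2-4) q(2-4) e] p q by simp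
      next
        case False then show ?thesis using key[OF q(2-4) p(2-4) e[symmetric]] p q by simp
      qed
    qed
  qed
  have finZ0: "finite Z0" unfolding Z0_def by (rule finite_subset[of _ "{0..<N}"]) auto
  have "card Z \<le> card Z0" by (rule card_inj_on_le[OF inj img finZ0])
  then have s2le: "(\<Sum>i\<in>{0..<N}. B i) \<le> (\<Sum>h\<in>{0..<N}. if hv h \<and> A h = 0 then 1 else (0::int))"
    using cardZ unfolding Z0_def by (simp add: sum_ind_card)
  have split: "a1 = (\<Sum>h\<in>{0..<N}. if hv h \<and> A h = 0 then 1 else (0::int)) + (\<Sum>h\<in>{0..<N}. if hv h \<and> A h \<noteq> 0 then 1 else (0::int))"
    unfolding a1_eq by (auto simp: sum.distrib[symmetric] intro!: sum.cong)
  have d1nn: "0 \<le> d1" using A_nn[of 0] A_le[of 0] by simp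
  have "(\<Sum>i\<in>{0..<N}. A i) \<le> (\<Sum>h\<in>{0..<N}. d1 * (if hv h \<and> A h \<noteq> 0 then 1 else 0))"
    using A_le A_off by (intro sum_mono) auto
  also have "\<dots> = d1 * (\<Sum>h\<in>{0..<N}. if hv h \<and> A h \<noteq> 0 then 1 else 0)" by (simp add: sum_distrib_left)
  also have "\<dots> \<le> d1 * (a1 - (\<Sum>i\<in>{0..<N}. B i))" using split s2le d1nn by (intro mult_left_mono) auto
  finally show ?thesis .
qed

lemma A_sum_le: "(\<Sum>i\<in>{0..<N}. A i) \<le> d1 * a1"
proof -
  have "(\<Sum>i\<in>{0..<N}. A i) \<le> (\<Sum>h\<in>{0..<N}. d1 * (if hv h then 1 else 0))"
    using A_le A_off by (intro sum_mono) auto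
  then show ?thesis unfolding a1_eq by (simp add: sum_distrib_left)
qed

end

lemma gen_mirror:
  assumes g: "gen N hv A B a1 a2 d1"
    and B_le: "\<And>i. B i \<le> d2"
    and CH2: "\<And>p q. p \<le> q \<Longrightarrow> hv p \<Longrightarrow> \<not> hv q \<Longrightarrow>
      a2 * (\<Sum>i\<in>{p..<q+1}. if hv i then 1 else 0) \<le> a1 * (\<Sum>i\<in>{p..<q+1}. if hv i then 0 else 1) + a2 - 1"
  shows "gen N (\<lambda>i. \<not> hv (- i)) (\<lambda>i. B (- i)) (\<lambda>i. A (- i)) a2 a1 d2"
proof -
  interpret gen N hv A B a1 a2 d1 by (rule g)
  have per: "\<And>\<phi> i. (\<And>i. \<phi> (i + N) = \<phi> i) \<Longrightarrow> \<phi> (- (i + N)) = \<phi> (- i)"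
  proof -
    fix \<phi> :: "int \<Rightarrow> 'a" and i assume "\<And>i. \<phi> (i + N) = \<phi> i"
    then have "\<phi> (- i - N + N) = \<phi> (- i - N)" by blast
    then show "\<phi> (- (i + N)) = \<phi> (- i)" by simp
  qed
  have a2v: "a2 = (\<Sum>i\<in>{0..<N}. if \<not> hv (- i) then 1 else 0)"
  proof -
    have "(\<Sum>i\<in>{0..<N}. if \<not> hv (- i) then 1 else (0::int)) = (\<Sum>i\<in>{0..<N}. if \<not> hv i then 1 else 0)"
      by (rule neg_per_sum[where \<phi>="\<lambda>i. if \<not> hv i then 1 else (0::int)"]) (use hv_per Npos in auto)
    also have "\<dots> = (\<Sum>i\<in>{0..<N}. 1 - (if hv i then 1 else 0))" by (intro sum.cong) auto
    also have "\<dots> = N - a1" unfolding a1_eq using Npos by (simp add: sum_subtractf)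
    finally show ?thesis using a2_eq by simp
  qed
  show ?thesis
  proof (unfold_locales)
    show "0 < N" by (rule Npos)
    show "\<And>i. (\<not> hv (- (i + N))) = (\<not> hv (- i))" using per[of hv] hv_per by blast
    show "\<And>i. B (- (i + N)) = B (- i)" using per[of B] B_per by blast
    show "\<And>i. A (- (i + N)) = A (- i)" using per[of A] A_per by blast
    show "\<And>i. 0 \<le> B (- i)" by (rule B_nn)
    show "\<And>i. 0 \<le> A (- i)" by (rule A_nn)
    show "\<And>i. \<not> \<not> hv (- i) \<Longrightarrow> B (- i) = 0" using B_off by simp
    show "\<And>i. \<not> hv (- i) \<Longrightarrow> A (- i) = 0" using A_off by simp
    show "\<And>i. B (- i) \<le> d2" by (rule B_le)
    show "a2 = (\<Sum>i\<in>{0..<N}. if \<not> hv (- i) then 1 else 0)" by (rule a2v)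
    show "a1 = N - a2" using a2_eq by simp
  next
    fix h m assume a: "\<not> hv (- h)" "\<not> \<not> hv (- (h + m))" "0 \<le> m" "m < N"
    let ?h = "- h - m"
    have cp: "(\<exists>e. ?h \<le> e \<and> e < ?h + m \<and> (\<Sum>i\<in>{?h..<e+1}. if hv i then - A i else 1) = 0)
      \<or> (\<exists>e. ?h < e \<and> e \<le> ?h + m \<and> (\<Sum>i\<in>{e..<?h+m+1}. if hv i then 1 else - B i) = 0)"
      using CP[of ?h m] a by (simp add: algebra_simps)
    then show "(\<exists>e. h \<le> e \<and> e < h + m \<and> (\<Sum>i\<in>{h..<e+1}. if \<not> hv (- i) then - B (- i) else 1) = 0) \<or>
         (\<exists>e. h < e \<and> e \<le> h + m \<and> (\<Sum>i\<in>{e..<h+m+1}. if \<not> hv (- i) then 1 else - A (- i)) = 0)"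
    proof
      assume "\<exists>e. ?h \<le> e \<and> e < ?h + m \<and> (\<Sum>i\<in>{?h..<e+1}. if hv i then - A i else 1) = 0"
      then obtain e where e: "?h \<le> e" "e < ?h + m" "(\<Sum>i\<in>{?h..<e+1}. if hv i then - A i else 1) = 0" by blast
      have "(\<Sum>i\<in>{- e..<h+m+1}. if \<not> hv (- i) then 1 else - A (- i))
          = (\<Sum>i\<in>{- e..<h+m+1}. (\<lambda>i. if hv i then - A i else 1) (- i))" by (intro sum.cong) auto
      also have "\<dots> = (\<Sum>i\<in>{?h..<e+1}. if hv i then - A i else 1)"
        using isum_neg[of "\<lambda>i. if hv i then - A i else 1" "- e" "h+m+1"] by (simp add: algebra_simps)
      finally show ?thesis using e by (intro disjI2 exI[of _ "- e"]) auto
    next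
      assume "\<exists>e. ?h < e \<and> e \<le> ?h + m \<and> (\<Sum>i\<in>{e..<?h+m+1}. if hv i then 1 else - B i) = 0"
      then obtain e where e: "?h < e" "e \<le> ?h + m" "(\<Sum>i\<in>{e..<?h+m+1}. if hv i then 1 else - B i) = 0" by blast
      have "(\<Sum>i\<in>{h..<- e+1}. if \<not> hv (- i) then - B (- i) else 1)
          = (\<Sum>i\<in>{h..<- e+1}. (\<lambda>i. if hv i then 1 else - B i) (- i))" by (intro sum.cong) auto
      also have "\<dots> = (\<Sum>i\<in>{e..<?h+m+1}. if hv i then 1 else - B i)"
        using isum_neg[of "\<lambda>i. if hv i then 1 else - B i" h "- e + 1"] by (simp add: algebra_simps)
      finally show ?thesis using e by (intro disjI1 exI[of _ "- e"]) auto
    qed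
  next
    fix p q assume a: "p \<le> q" "\<not> hv (- p)" "\<not> \<not> hv (- q)"
    have ch: "a2 * (\<Sum>i\<in>{- q..<- p+1}. if hv i then 1 else 0) \<le> a1 * (\<Sum>i\<in>{- q..<- p+1}. if hv i then 0 else 1) + a2 - 1"
      using CH2[of "- q" "- p"] a by simp
    have e1: "(\<Sum>i\<in>{p..<q+1}. if \<not> hv (- i) then 0 else 1) = (\<Sum>i\<in>{- q..<- p+1}. if hv i then 1 else (0::int))"
    proof -
      have "(\<Sum>i\<in>{p..<q+1}. if \<not> hv (- i) then 0 else 1) = (\<Sum>i\<in>{p..<q+1}. (\<lambda>i. if hv i then 1 else (0::int)) (- i))"
        by (intro sum.cong) auto
      also have "\<dots> = (\<Sum>i\<in>{- q..<- p+1}. if hv i then 1 else (0::int))"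
        using isum_neg[of "\<lambda>i. if hv i then 1 else (0::int)" p "q+1"] by (simp add: algebra_simps)
      finally show ?thesis .
    qed
    have e2: "(\<Sum>i\<in>{p..<q+1}. if \<not> hv (- i) then 1 else 0) = (\<Sum>i\<in>{- q..<- p+1}. if hv i then 0 else (1::int))"
    proof -
      have "(\<Sum>i\<in>{p..<q+1}. if \<not> hv (- i) then 1 else 0) = (\<Sum>i\<in>{p..<q+1}. (\<lambda>i. if hv i then 0 else (1::int)) (- i))"
        by (intro sum.cong) auto
      also have "\<dots> = (\<Sum>i\<in>{- q..<- p+1}. if hv i then 0 else (1::int))"
        using isum_neg[of "\<lambda>i. if hv i then 0 else (1::int)" p "q+1"] by (simp add: algebra_simps)
      finally show ?thesis .
    qed
    show "a2 * (\<Sum>i\<in>{p..<q+1}. if \<not> hv (- i) then 0 else 1) \<le> a1 * (\<Sum>i\<in>{p..<q+1}. if \<not> hv (- i) then 1 else 0) + a2 - 1"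
      using ch e1 e2 by simp
  qed
qed


definition hvC :: "nat \<Rightarrow> nat \<Rightarrow> int \<Rightarrow> bool" where
  "hvC a1 a2 i = ((int a2 * i) mod int (a1 + a2) < int a1)"

definition rr :: "nat \<Rightarrow> nat \<Rightarrow> int \<Rightarrow> int" where
  "rr a1 a2 i = (int a2 * i) mod int (a1 + a2)"

context
  fixes a1 a2 :: nat
  assumes npos: "0 < a1 + a2"
begin

abbreviation "NC \<equiv> int (a1 + a2)"
abbreviation "hv \<equiv> hvC a1 a2"
abbreviation "r \<equiv> rr a1 a2"

lemma NCpos: "0 < NC" using npos by linarith

lemma hv_r: "hv i = (r i < int a1)" unfolding hvC_def rr_def by simp

lemma r_range: "0 \<le> r i" "r i < NC" unfolding rr_def using NCpos by auto

lemma hvC_per: "hv (i + NC) = hv i"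
proof -
  have "(int a2 * (i + NC)) mod NC = (int a2 * i + int a2 * NC) mod NC" by (simp only: distrib_left)
  also have "\<dots> = (int a2 * i) mod NC" by (rule mod_mult_self1)
  finally show ?thesis unfolding hvC_def by simp
qed

lemma r_step_H: "hv i \<Longrightarrow> r (i + 1) = r i + int a2"
proof -
  assume h: "hv i"
  have "r (i + 1) = (r i + int a2) mod NC" unfolding rr_def by (simp add: distrib_left mod_add_left_eq)
  moreover have "r i + int a2 < NC" using h hv_r by simp
  ultimately show ?thesis using r_range[of i] by simp
qed

lemma r_step_V: "\<not> hv i \<Longrightarrow> r (i + 1) = r i - int a1"
proof -
  assume h: "\<not> hv i"
  have "r (i + 1) = (r i + int a2) mod NC" unfolding rr_def by (simp add: distrib_left mod_add_left_eq)
  also have "\<dots> = (r i - int a1 + 1 * NC) mod NC" by simp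
  also have "\<dots> = (r i - int a1) mod NC" by (rule mod_mult_self1)
  also have "\<dots> = r i - int a1" using h hv_r r_range[of i] by simp
  finally show ?thesis .
qed

lemma r_tele: "r (p + int k) - r p = int a2 * (\<Sum>i\<in>{p..<p + int k}. if hv i then 1 else 0)
    - int a1 * (\<Sum>i\<in>{p..<p + int k}. if hv i then 0 else 1)"
proof (induction k)
  case 0 then show ?case by simp
next
  case (Suc k)
  have e: "p + int (Suc k) = (p + int k) + 1" by simp
  show ?case
  proof (cases "hv (p + int k)")
    case True
    then show ?thesis unfolding e using Suc r_step_H[OF True]
        isum_last[of p "p + int k" "\<lambda>i. if hv i then 1 else (0::int)"]
        isum_last[of p "p + int k" "\<lambda>i. if hv i then 0 else (1::int)"]
      by (simp add: algebra_simps)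
  next
    case False
    then show ?thesis unfolding e using Suc r_step_V[OF False]
        isum_last[of p "p + int k" "\<lambda>i. if hv i then 1 else (0::int)"]
        isum_last[of p "p + int k" "\<lambda>i. if hv i then 0 else (1::int)"]
      by (simp add: algebra_simps)
  qed
qed

lemma r_tele': "p \<le> q \<Longrightarrow> r q - r p = int a2 * (\<Sum>i\<in>{p..<q}. if hv i then 1 else 0)
    - int a1 * (\<Sum>i\<in>{p..<q}. if hv i then 0 else 1)"
  using r_tele[of p "nat (q - p)"] by simp

lemma CH1: "p \<le> q \<Longrightarrow> hv p \<Longrightarrow> \<not> hv q \<Longrightarrow>
    int a1 * (\<Sum>i\<in>{p..<q+1}. if hv i then 0 else 1) \<le> int a2 * (\<Sum>i\<in>{p..<q+1}. if hv i then 1 else 0) + int a1 - 1"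
  using r_tele'[of p "q+1"] r_range[of "q+1"] hv_r[of p] by simp

lemma CH2: "p \<le> q \<Longrightarrow> hv p \<Longrightarrow> \<not> hv q \<Longrightarrow>
    int a2 * (\<Sum>i\<in>{p..<q+1}. if hv i then 1 else 0) \<le> int a1 * (\<Sum>i\<in>{p..<q+1}. if hv i then 0 else 1) + int a2 - 1"
  using r_tele'[of p "q+1"] r_range[of p] r_step_V[of q] r_range[of q] by simp

lemma count_H: "(\<Sum>i\<in>{0..<NC}. if hv i then 1 else 0) = int a1"
proof -
  let ?H = "(\<Sum>i\<in>{0..<NC}. if hv i then 1 else (0::int))"
  let ?V = "(\<Sum>i\<in>{0..<NC}. if hv i then 0 else (1::int))"
  have "r NC - r 0 = int a2 * ?H - int a1 * ?V" using r_tele'[of 0 NC] NCpos by simp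
  moreover have "r NC = r 0" unfolding rr_def by simp
  moreover have "?H + ?V = NC" by (simp add: sum.distrib[symmetric]) (simp add: if_distrib cong: if_cong)
  ultimately have hv_eq: "int a1 * ?V = int a2 * ?H" and sm: "?H + ?V = NC" by simp_all
  have "NC * ?H = int a1 * ?H + int a2 * ?H" by (simp add: distrib_right)
  also have "\<dots> = int a1 * ?H + int a1 * ?V" using hv_eq by simp
  also have "\<dots> = int a1 * (?H + ?V)" by (simp add: distrib_left)
  also have "\<dots> = NC * int a1" using sm by simp
  finally have "NC * ?H = NC * int a1" .
  then show ?thesis using NCpos by simp
qed

lemma run_a:
  assumes "int d2 * int a2 \<le> int a1" "\<not> hv v" "1 \<le> j" "j \<le> int d2"
  shows "hv (v - j)"
proof -
  have rv: "int a1 \<le> r v" using assms(2) hv_r by simp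
  have "int a2 * j \<le> int a2 * int d2" using assms(4) by (intro mult_left_mono) auto
  then have aj: "int a2 * j \<le> int a1" using assms(1) by (simp add: mult.commute)
  have "r (v - j) = (r v - int a2 * j) mod NC" unfolding rr_def by (simp add: right_diff_distrib mod_diff_left_eq)
  also have "\<dots> = r v - int a2 * j"
  proof -
    have "0 \<le> int a2 * j" using assms(3) by simp
    then show ?thesis using rv aj r_range[of v] by (intro mod_pos_pos_trivial) auto
  qed
  finally have e: "r (v - j) = r v - int a2 * j" .
  have m: "int a2 \<le> int a2 * j" using assms(3) by (simp add: mult_le_cancel_left1)
  have "r (v - j) < int a1" using e m r_range[of v] by linarith
  then show ?thesis using hv_r by simp
qed

lemma run_b:
  assumes "int d1 * int a1 \<le> int a2" "hv h" "1 \<le> j" "j \<le> int d1"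
  shows "\<not> hv (h + j)"
proof -
  have rh: "r h < int a1" using assms(2) hv_r by simp
  have "int a1 * j \<le> int a1 * int d1" using assms(4) by (intro mult_left_mono) auto
  then have aj: "int a1 * j \<le> int a2" using assms(1) by (simp add: mult.commute)
  have "r (h + j) = (r h + int a2 * j) mod NC" unfolding rr_def by (simp add: distrib_left mod_add_left_eq)
  also have "\<dots> = (r h - int a1 * j + NC + (j - 1) * NC) mod NC" by (simp add: algebra_simps)
  also have "\<dots> = (r h - int a1 * j + NC) mod NC" by (rule mod_mult_self1)
  also have "\<dots> = r h - int a1 * j + NC"
  proof (rule mod_pos_pos_trivial)
    show "0 \<le> r h - int a1 * j + NC" using aj r_range[of h] by simp
    have "int a1 \<le> int a1 * j" using assms(3) by (simp add: mult_le_cancel_left1)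
    then show "r h - int a1 * j + NC < NC" using rh by simp
  qed
  finally have "r (h + j) = r h - int a1 * j + NC" .
  then show ?thesis using hv_r aj r_range[of h] by simp
qed

end

lemma cyc_img:
  assumes "a < n" "k < n"
  shows "cyc n a ((a + k) mod n) = (\<lambda>t. (a + t) mod n) ` {0..k}"
proof -
  have "((a + k) mod n + n - a) mod n = k"
  proof (cases "a + k < n")
    case True
    then have "(a + k) mod n + n - a = k + n" by simp
    then show ?thesis using assms by simp
  next
    case False
    then have "(a + k) mod n = a + k - n" using assms by (simp add: mod_if)
    then have "(a + k) mod n + n - a = k" using False by simp
    then show ?thesis using assms by simp
  qed
  then show ?thesis unfolding cyc_def by auto
qed

lemma cyc_inj:
  fixes a k n :: nat
  assumes "k < n"
  shows "inj_on (\<lambda>t. (a + t) mod n) {0..k}"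
proof (rule inj_onI)
  fix t t' assume tt: "t \<in> {0..k}" "t' \<in> {0..k}" "(a + t) mod n = (a + t') mod n"
  have "int ((a + t) mod n) = int ((a + t') mod n)" using tt(3) by simp
  then have "(int a + int t) mod int n = (int a + int t') mod int n" by (simp add: of_nat_mod)
  then have d: "int n dvd (int a + int t) - (int a + int t')" by (simp add: mod_eq_dvd_iff)
  show "t = t'"
  proof (rule ccontr)
    assume "t \<noteq> t'"
    then have "\<bar>int n\<bar> \<le> \<bar>(int a + int t) - (int a + int t')\<bar>" using d by (intro dvd_imp_le_int) auto
    then show False using tt assms by auto
  qed
qed

lemma cyc_sum:
  assumes "a < n" "k < n"
  shows "(\<Sum>x\<in>cyc n a ((a + k) mod n) \<inter> DD. w x) = (\<Sum>t\<in>{0..k}. if (a + t) mod n \<in> DD then w ((a + t) mod n) else 0)"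
proof -
  have "(\<Sum>x\<in>cyc n a ((a + k) mod n) \<inter> DD. w x) = (\<Sum>x\<in>(\<lambda>t. (a + t) mod n) ` {0..k}. if x \<in> DD then w x else 0)"
    unfolding cyc_img[OF assms] by (rule sum.inter_restrict) simp
  also have "\<dots> = (\<Sum>t\<in>{0..k}. if (a + t) mod n \<in> DD then w ((a + t) mod n) else 0)"
    by (subst sum.reindex[OF cyc_inj[OF assms(2)]]) simp
  finally show ?thesis .
qed

lemma nat_int_sum:
  fixes \<phi> :: "nat \<Rightarrow> 'b::comm_monoid_add"
  shows "(\<Sum>t\<in>{0..k}. \<phi> t) = (\<Sum>i\<in>{h..<h + int k + 1}. \<phi> (nat (i - h)))"
  by (rule sum.reindex_bij_witness[of _ "\<lambda>i. nat (i - h)" "\<lambda>t. h + int t"]) auto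

context
  fixes a1 a2 :: nat
  assumes npos: "0 < a1 + a2"
begin

abbreviation "NC' \<equiv> int (a1 + a2)"
abbreviation "hv' \<equiv> hvC a1 a2"

lemma hv_mod': "hv' (x mod NC') = hv' x"
  by (rule per_mod[where \<phi>="hvC a1 a2"]) (rule hvC_per[OF npos])

lemma hv_nat: "hv' (int x) = ((a2 * x) mod (a1 + a2) < a1)"
proof -
  have "int ((a2 * x) mod (a1 + a2)) = (int a2 * int x) mod int (a1 + a2)" by (simp only: of_nat_mod of_nat_mult)
  then show ?thesis unfolding hvC_def by (metis of_nat_less_iff)
qed

lemma D1_char: "D1 a1 a2 = {j. j < a1 + a2 \<and> hv' (int j)}"
  unfolding D1_def using dyck_nth hv_nat by auto

lemma D2_char: "D2 a1 a2 = {j. j < a1 + a2 \<and> \<not> hv' (int j)}"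
  unfolding D2_def using dyck_nth hv_nat by auto

lemma key_mod:
  assumes "int a = h mod NC'"
  shows "int ((a + t) mod (a1 + a2)) = (h + int t) mod NC'"
proof -
  have "int ((a + t) mod (a1 + a2)) = (int a + int t) mod NC'" by (simp add: of_nat_mod)
  also have "\<dots> = (h mod NC' + int t) mod NC'" using assms by simp
  also have "\<dots> = (h + int t) mod NC'" by (simp add: mod_add_left_eq)
  finally show ?thesis .
qed

lemma cyc_int_gen:
  fixes w :: "nat \<Rightarrow> nat" and P :: "int \<Rightarrow> bool"
  assumes Pper: "\<And>x. P (x mod NC') = P x"
    and a: "a < a1 + a2" and k: "k < a1 + a2" and ah: "int a = h mod NC'"
  shows "int (\<Sum>x\<in>cyc (a1 + a2) a ((a + k) mod (a1 + a2)) \<inter> {j. j < a1 + a2 \<and> P (int j)}. w x)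
     = (\<Sum>i\<in>{h..<h + int k + 1}. if P i then int (w (nat (i mod NC'))) else 0)"
proof -
  let ?n = "a1 + a2"
  have "(\<Sum>x\<in>cyc ?n a ((a + k) mod ?n) \<inter> {j. j < ?n \<and> P (int j)}. w x)
      = (\<Sum>t\<in>{0..k}. if (a + t) mod ?n \<in> {j. j < ?n \<and> P (int j)} then w ((a + t) mod ?n) else 0)"
    by (rule cyc_sum[OF a k])
  also have "\<dots> = (\<Sum>t\<in>{0..k}. if P (h + int t) then w (nat ((h + int t) mod NC')) else 0)"
  proof (rule sum.cong)
    fix t assume "t \<in> {0..k}"
    have km: "int ((a + t) mod ?n) = (h + int t) mod NC'" by (rule key_mod[OF ah])
    have "(a + t) mod ?n < ?n" using npos by simp
    moreover have "P (int ((a + t) mod ?n)) = P (h + int t)" using km Pper by simp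
    moreover have "(a + t) mod ?n = nat ((h + int t) mod NC')" using km by simp
    ultimately show "(if (a + t) mod ?n \<in> {j. j < ?n \<and> P (int j)} then w ((a + t) mod ?n) else 0)
        = (if P (h + int t) then w (nat ((h + int t) mod NC')) else 0)" by simp
  qed simp
  finally have "int (\<Sum>x\<in>cyc ?n a ((a + k) mod ?n) \<inter> {j. j < ?n \<and> P (int j)}. w x)
      = (\<Sum>t\<in>{0..k}. if P (h + int t) then int (w (nat ((h + int t) mod NC'))) else 0)"
    by (simp add: of_nat_sum if_distrib cong: if_cong)
  also have "\<dots> = (\<Sum>i\<in>{h..<h + int k + 1}. if P i then int (w (nat (i mod NC'))) else 0)"
    by (subst nat_int_sum[of _ k h]) (intro sum.cong, auto)
  finally show ?thesis .
qed

definition AC :: "(nat \<Rightarrow> nat) \<Rightarrow> int \<Rightarrow> int" where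
  "AC S1 i = (if hv' i then int (S1 (nat (i mod NC'))) else 0)"
definition BC :: "(nat \<Rightarrow> nat) \<Rightarrow> int \<Rightarrow> int" where
  "BC S2 i = (if hv' i then 0 else int (S2 (nat (i mod NC'))))"

lemma CP_conc:
  assumes cp: "compatible_pair a1 a2 S1 S2"
    and h: "hv' h" "\<not> hv' (h + m)" "0 \<le> m" "m < NC'"
  shows "(\<exists>e. h \<le> e \<and> e < h + m \<and> (\<Sum>i\<in>{h..<e+1}. if hv' i then - AC S1 i else 1) = 0)
    \<or> (\<exists>e. h < e \<and> e \<le> h + m \<and> (\<Sum>i\<in>{e..<h+m+1}. if hv' i then 1 else - BC S2 i) = 0)"
proof -
  let ?n = "a1 + a2"
  have NCp: "0 < NC'" using npos by linarith
  have hvper: "\<And>x. hv' (x mod NC') = hv' x" by (rule hv_mod')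
  have nhvper: "\<And>x. (\<not> hv' (x mod NC')) = (\<not> hv' x)" using hvper by simp
  define a where "a = nat (h mod NC')"
  define km where "km = nat m"
  define v where "v = nat ((h + m) mod NC')"
  have ah: "int a = h mod NC'" unfolding a_def using NCp by simp
  have a_lt: "a < ?n" unfolding a_def using NCp by (simp add: nat_less_iff)
  have km_lt: "km < ?n" unfolding km_def using h by linarith
  have v_eq: "v = (a + km) mod ?n"
  proof -
    have "int ((a + km) mod ?n) = (h + m) mod NC'" using key_mod[OF ah, of km] h unfolding km_def by simp
    then show ?thesis unfolding v_def by simp
  qed
  have aD1: "a \<in> D1 a1 a2" unfolding D1_char using a_lt ah hvper h by simp
  have vD2: "v \<in> D2 a1 a2" unfolding D2_char v_def using NCp h hvper by (simp add: nat_less_iff)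
  obtain e where e: "(e \<in> cyc ?n a v \<and> e \<noteq> v \<and>
           card (cyc ?n a e \<inter> D2 a1 a2) = (\<Sum>h' \<in> cyc ?n a e \<inter> D1 a1 a2. S1 h'))
      \<or> (e \<in> cyc ?n a v \<and> e \<noteq> a \<and>
           card (cyc ?n e v \<inter> D1 a1 a2) = (\<Sum>v' \<in> cyc ?n e v \<inter> D2 a1 a2. S2 v'))"
    using cp aD1 vD2 unfolding compatible_pair_def by blast
  have "e \<in> cyc ?n a v" using e by blast
  then obtain k where k: "k \<le> km" "e = (a + k) mod ?n" unfolding v_eq cyc_img[OF a_lt km_lt] by auto
  have k_lt: "k < ?n" using k km_lt by simp
  have Aeq: "\<And>i. (if hv' i then int (S1 (nat (i mod NC'))) else 0) = AC S1 i" unfolding AC_def by simp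
  have Beq: "\<And>i. (if \<not> hv' i then int (S2 (nat (i mod NC'))) else 0) = BC S2 i" unfolding BC_def by simp
  show ?thesis
  proof (cases "e \<in> cyc ?n a v \<and> e \<noteq> v \<and>
           card (cyc ?n a e \<inter> D2 a1 a2) = (\<Sum>h' \<in> cyc ?n a e \<inter> D1 a1 a2. S1 h')")
    case True
    have kne: "k \<noteq> km" using True k v_eq by auto
    have c1: "int (card (cyc ?n a e \<inter> D2 a1 a2)) = (\<Sum>i\<in>{h..<h + int k + 1}. if \<not> hv' i then 1 else 0)"
    proof -
      have "card (cyc ?n a e \<inter> D2 a1 a2) = (\<Sum>x\<in>cyc ?n a e \<inter> D2 a1 a2. (\<lambda>_. 1::nat) x)" by simp
      moreover have "int (\<Sum>x\<in>cyc ?n a ((a + k) mod ?n) \<inter> {j. j < ?n \<and> \<not> hv' (int j)}. (\<lambda>_. 1::nat) x)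
         = (\<Sum>i\<in>{h..<h + int k + 1}. if \<not> hv' i then int ((\<lambda>_. 1::nat) (nat (i mod NC'))) else 0)"
        by (rule cyc_int_gen[of "\<lambda>x. \<not> hv' x" a k h "\<lambda>_. 1", OF nhvper a_lt k_lt ah])
      moreover have "(\<Sum>i\<in>{h..<h + int k + 1}. if \<not> hv' i then int ((\<lambda>_. 1::nat) (nat (i mod NC'))) else 0)
          = (\<Sum>i\<in>{h..<h + int k + 1}. if \<not> hv' i then 1 else 0)" by (intro sum.cong) auto
      ultimately show ?thesis unfolding k(2) D2_char by simp
    qed
    have c2: "int (\<Sum>h' \<in> cyc ?n a e \<inter> D1 a1 a2. S1 h') = (\<Sum>i\<in>{h..<h + int k + 1}. AC S1 i)"
      unfolding k(2) D1_char using cyc_int_gen[of "hv'" a k h S1, OF hvper a_lt k_lt ah] Aeq by simp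
    have "(\<Sum>i\<in>{h..<h + int k + 1}. if hv' i then - AC S1 i else 1)
        = (\<Sum>i\<in>{h..<h + int k + 1}. if \<not> hv' i then 1 else 0) - (\<Sum>i\<in>{h..<h + int k + 1}. AC S1 i)"
      by (simp add: sum_subtractf[symmetric] AC_def) (intro sum.cong, auto simp: AC_def)
    also have "\<dots> = 0" using c1 c2 True by simp
    finally show ?thesis using kne k unfolding km_def using h by (intro disjI1 exI[of _ "h + int k"]) auto
  next
    case False
    then have F: "e \<noteq> a" "card (cyc ?n e v \<inter> D1 a1 a2) = (\<Sum>v' \<in> cyc ?n e v \<inter> D2 a1 a2. S2 v')" using e by auto
    have k0: "k \<noteq> 0" using F k a_lt by (metis add.right_neutral mod_less)
    define a' where "a' = (a + k) mod ?n"
    have a'_lt: "a' < ?n" unfolding a'_def using npos by simp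
    have ah': "int a' = (h + int k) mod NC'" unfolding a'_def by (rule key_mod[OF ah])
    have k'_lt: "km - k < ?n" using km_lt by simp
    have v': "v = (a' + (km - k)) mod ?n"
    proof -
      have "(a + km) mod ?n = ((a + k) + (km - k)) mod ?n" using k(1) by simp
      also have "\<dots> = ((a + k) mod ?n + (km - k)) mod ?n" by (rule mod_add_left_eq[symmetric])
      finally show ?thesis unfolding v_eq a'_def .
    qed
    have ea: "e = a'" unfolding a'_def k(2) ..
    have c1: "int (card (cyc ?n e v \<inter> D1 a1 a2)) = (\<Sum>i\<in>{h + int k..<h + int k + int (km - k) + 1}. if hv' i then 1 else 0)"
    proof -
      have "card (cyc ?n e v \<inter> D1 a1 a2) = (\<Sum>x\<in>cyc ?n e v \<inter> D1 a1 a2. (\<lambda>_. 1::nat) x)" by simp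
      moreover have "int (\<Sum>x\<in>cyc ?n a' ((a' + (km - k)) mod ?n) \<inter> {j. j < ?n \<and> hv' (int j)}. (\<lambda>_. 1::nat) x)
         = (\<Sum>i\<in>{h + int k..<h + int k + int (km - k) + 1}. if hv' i then int ((\<lambda>_. 1::nat) (nat (i mod NC'))) else 0)"
        by (rule cyc_int_gen[of "hv'" a' "km - k" "h + int k" "\<lambda>_. 1", OF hvper a'_lt k'_lt ah'])
      moreover have "(\<Sum>i\<in>{h + int k..<h + int k + int (km - k) + 1}. if hv' i then int ((\<lambda>_. 1::nat) (nat (i mod NC'))) else 0)
          = (\<Sum>i\<in>{h + int k..<h + int k + int (km - k) + 1}. if hv' i then 1 else 0)" by (intro sum.cong) auto
      ultimately show ?thesis unfolding ea v' D1_char by simp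
    qed
    have c2: "int (\<Sum>v' \<in> cyc ?n e v \<inter> D2 a1 a2. S2 v') = (\<Sum>i\<in>{h + int k..<h + int k + int (km - k) + 1}. BC S2 i)"
      unfolding ea v' D2_char using cyc_int_gen[of "\<lambda>x. \<not> hv' x" a' "km - k" "h + int k" S2, OF nhvper a'_lt k'_lt ah'] Beq by simp
    have ival: "h + int k + int (km - k) + 1 = h + m + 1" using k(1) h unfolding km_def by simp
    have "(\<Sum>i\<in>{h + int k..<h + m + 1}. if hv' i then 1 else - BC S2 i)
        = (\<Sum>i\<in>{h + int k..<h + m + 1}. if hv' i then 1 else 0) - (\<Sum>i\<in>{h + int k..<h + m + 1}. BC S2 i)"
      by (simp add: sum_subtractf[symmetric] BC_def) (intro sum.cong, auto simp: BC_def)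
    also have "\<dots> = 0" using c1 c2 F ival by simp
    finally show ?thesis using k0 k unfolding km_def using h by (intro disjI2 exI[of _ "h + int k"]) auto
  qed
qed

end

lemma hull_comb:
  fixes S :: "'a::real_vector set"
  assumes "a \<in> convex hull S" "b \<in> convex hull S" "0 \<le> u" "u \<le> 1" "p = (1 - u) *\<^sub>R a + u *\<^sub>R b"
  shows "p \<in> convex hull S"
  using convexD[OF convex_convex_hull assms(1,2), of "1 - u" u] assms by simp

lemma trap_a:
  fixes X Y c x y :: real
  assumes x0: "0 \<le> x" and y0: "0 \<le> y" and yY: "y \<le> Y" and c0: "0 \<le> c"
    and xl: "x + c * y \<le> X" and cY: "c * Y \<le> X"
  shows "(x, y) \<in> convex hull {(0, 0), (X, 0), (0, Y), (X - c * Y, Y)}"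
proof -
  let ?H = "convex hull {(0::real, 0::real), (X, 0), (0, Y), (X - c * Y, Y)}"
  have in0: "(0, 0) \<in> ?H" "(X, 0) \<in> ?H" "(0, Y) \<in> ?H" "(X - c * Y, Y) \<in> ?H"
    by (auto intro: hull_inc)
  have L: "(0, y) \<in> ?H"
  proof (cases "Y = 0")
    case True then show ?thesis using in0 y0 yY by simp
  next
    case False
    then have Yp: "0 < Y" using y0 yY by simp
    show ?thesis
      by (rule hull_comb[OF in0(1) in0(3), of "y / Y"]) (use Yp y0 yY in \<open>auto simp: prod_eq_iff\<close>)
  qed
  have R: "(X - c * y, y) \<in> ?H"
  proof (cases "Y = 0")
    case True then show ?thesis using in0 y0 yY by simp
  next
    case False
    then have Yp: "0 < Y" using y0 yY by simp
    show ?thesis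
      by (rule hull_comb[OF in0(2) in0(4), of "y / Y"]) (use Yp y0 yY in \<open>auto simp: prod_eq_iff field_simps\<close>)
  qed
  show ?thesis
  proof (cases "X - c * y = 0")
    case True
    then have "x = 0" using x0 xl by simp
    then show ?thesis using L by simp
  next
    case False
    then have dp: "0 < X - c * y" using x0 xl by simp
    define s where "s = x / (X - c * y)"
    have sx: "s * (X - c * y) = x" unfolding s_def using dp by simp
    have "0 \<le> s" "s \<le> 1" unfolding s_def using dp x0 xl by auto
    moreover have "(x, y) = (1 - s) *\<^sub>R (0, y) + s *\<^sub>R (X - c * y, y)"
      using sx by (auto simp: prod_eq_iff algebra_simps)
    ultimately show ?thesis by (intro hull_comb[OF L R]) auto
  qed
qed

lemma trap_b:
  fixes X Y c x y :: real
  assumes x0: "0 \<le> x" and y0: "0 \<le> y" and xX: "x \<le> X" and c0: "0 \<le> c"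
    and yl: "y + c * x \<le> Y" and cX: "c * X \<le> Y"
  shows "(x, y) \<in> convex hull {(0, 0), (X, 0), (0, Y), (X, Y - c * X)}"
proof -
  let ?H = "convex hull {(0::real, 0::real), (X, 0), (0, Y), (X, Y - c * X)}"
  have in0: "(0, 0) \<in> ?H" "(X, 0) \<in> ?H" "(0, Y) \<in> ?H" "(X, Y - c * X) \<in> ?H"
    by (auto intro: hull_inc)
  have L: "(x, 0) \<in> ?H"
  proof (cases "X = 0")
    case True then show ?thesis using in0 x0 xX by simp
  next
    case False
    then have Xp: "0 < X" using x0 xX by simp
    show ?thesis
      by (rule hull_comb[OF in0(1) in0(2), of "x / X"]) (use Xp x0 xX in \<open>auto simp: prod_eq_iff\<close>)
  qed
  have R: "(x, Y - c * x) \<in> ?H"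
  proof (cases "X = 0")
    case True then show ?thesis using in0 x0 xX by simp
  next
    case False
    then have Xp: "0 < X" using x0 xX by simp
    show ?thesis
      by (rule hull_comb[OF in0(3) in0(4), of "x / X"]) (use Xp x0 xX in \<open>auto simp: prod_eq_iff field_simps\<close>)
  qed
  show ?thesis
  proof (cases "Y - c * x = 0")
    case True
    then have "y = 0" using y0 yl by simp
    then show ?thesis using L by simp
  next
    case False
    then have dp: "0 < Y - c * x" using y0 yl by simp
    define s where "s = y / (Y - c * x)"
    have sx: "s * (Y - c * x) = y" unfolding s_def using dp by simp
    have "0 \<le> s" "s \<le> 1" unfolding s_def using dp y0 yl by auto
    moreover have "(x, y) = (1 - s) *\<^sub>R (x, 0) + s *\<^sub>R (x, Y - c * x)"
      using sx by (auto simp: prod_eq_iff algebra_simps)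
    ultimately show ?thesis by (intro hull_comb[OF L R]) auto
  qed
qed

lemma quad_c:
  fixes X Y P Q x y :: real
  assumes P: "0 < P" and Q: "0 < Q" and XP: "P < X" and YQ: "Q < Y"
    and x0: "0 \<le> x" and xX: "x \<le> X" and y0: "0 \<le> y" and yY: "y \<le> Y"
    and C3: "\<not> (P \<le> x \<and> Q \<le> y)"
    and P1: "y < Q \<Longrightarrow> y = 0 \<or> Q * x + (X - P) * y < X * Q"
    and P2: "x < P \<Longrightarrow> x = 0 \<or> (Y - Q) * x + P * y < Y * P"
  shows "(x, y) \<in> (convex hull {(0, 0), (X, 0), (P, Q)} \<union> convex hull {(0, 0), (P, Q), (0, Y)})
      - ((closed_segment (X, 0) (P, Q) - {(X, 0)}) \<union> (closed_segment (0, Y) (P, Q) - {(0, Y)}))"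
proof -
  have mem: "(x, y) \<in> convex hull {(0, 0), (X, 0), (P, Q)} \<union> convex hull {(0, 0), (P, Q), (0, Y)}"
  proof (cases "P * y \<le> Q * x")
    case True
    have L1: "Q * x + (X - P) * y \<le> X * Q"
    proof (cases "y < Q")
      case True then show ?thesis using P1 xX Q by (auto simp: mult.commute)
    next
      case False
      then have "P * Q \<le> Q * x" using \<open>P * y \<le> Q * x\<close> P by (meson mult_left_mono not_less order_trans less_imp_le)
      then have "P \<le> x" using Q by (simp add: mult.commute)
      then show ?thesis using C3 False by simp
    qed
    let ?u = "1 - (Q * x - P * y) / (X * Q) - y / Q"
    have "(x, y) = ?u *\<^sub>R (0, 0) + ((Q * x - P * y) / (X * Q)) *\<^sub>R (X, 0) + (y / Q) *\<^sub>R (P, Q)"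
      using P Q XP by (auto simp: prod_eq_iff field_simps)
    moreover have "0 \<le> ?u"
    proof -
      have "(Q * x - P * y) / (X * Q) + y / Q = (Q * x + (X - P) * y) / (X * Q)" using P Q XP by (simp add: field_simps)
      also have "\<dots> \<le> 1" using L1 P Q XP by (simp add: divide_le_eq_1)
      finally show ?thesis by simp
    qed
    moreover have "0 \<le> (Q * x - P * y) / (X * Q)" using True P Q XP by simp
    moreover have "0 \<le> y / Q" using y0 Q by simp
    ultimately have "(x, y) \<in> convex hull {(0, 0), (X, 0), (P, Q)}"
      unfolding convex_hull_3 mem_Collect_eq
      apply -
      apply (rule exI[of _ ?u], rule exI[of _ "(Q * x - P * y) / (X * Q)"], rule exI[of _ "y / Q"])
      by simp
    then show ?thesis by simp
  next
    case False
    have L2: "(Y - Q) * x + P * y \<le> Y * P"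
    proof (cases "x < P")
      case True then show ?thesis using P2 yY P by (auto simp: mult.commute)
    next
      case False
      then have "Q * P \<le> P * y" using \<open>\<not> P * y \<le> Q * x\<close> Q by (meson mult_left_mono not_less order_trans less_imp_le)
      then have "Q \<le> y" using P by (simp add: mult.commute)
      then show ?thesis using C3 False by simp
    qed
    let ?u = "1 - x / P - (P * y - Q * x) / (P * Y)"
    have "(x, y) = ?u *\<^sub>R (0, 0) + (x / P) *\<^sub>R (P, Q) + ((P * y - Q * x) / (P * Y)) *\<^sub>R (0, Y)"
      using P Q YQ by (auto simp: prod_eq_iff field_simps)
    moreover have "0 \<le> ?u"
    proof -
      have "x / P + (P * y - Q * x) / (P * Y) = ((Y - Q) * x + P * y) / (Y * P)" using P Q YQ by (simp add: field_simps)
      also have "\<dots> \<le> 1" using L2 P Q YQ by (simp add: divide_le_eq_1)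
      finally show ?thesis by simp
    qed
    moreover have "0 \<le> (P * y - Q * x) / (P * Y)" using False P Q YQ by simp
    moreover have "0 \<le> x / P" using x0 P by simp
    ultimately have "(x, y) \<in> convex hull {(0, 0), (P, Q), (0, Y)}"
      unfolding convex_hull_3 mem_Collect_eq
      apply -
      apply (rule exI[of _ ?u], rule exI[of _ "x / P"], rule exI[of _ "(P * y - Q * x) / (P * Y)"])
      by simp
    then show ?thesis by simp
  qed
  have n1: "(x, y) \<notin> closed_segment (X, 0) (P, Q) - {(X, 0)}"
  proof
    assume "(x, y) \<in> closed_segment (X, 0) (P, Q) - {(X, 0)}"
    then obtain u where u: "0 \<le> u" "u \<le> 1" "(x, y) = (1 - u) *\<^sub>R (X, 0) + u *\<^sub>R (P, Q)" "(x, y) \<noteq> (X, 0)"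
      unfolding closed_segment_def by auto
    have xy: "x = X - u * (X - P)" "y = u * Q" using u(3) by (auto simp: algebra_simps)
    have "u \<noteq> 0" using u(4) xy by auto
    then have ypos: "0 < y" using u(1) Q xy by simp
    have eq: "Q * x + (X - P) * y = X * Q" unfolding xy by (simp add: algebra_simps)
    show False
    proof (cases "y < Q")
      case True then show False using P1 ypos eq by auto
    next
      case False
      then have "u = 1" using xy Q u(2) by (simp add: mult_le_cancel_right1 not_less)
      then show False using C3 xy by simp
    qed
  qed
  have n2: "(x, y) \<notin> closed_segment (0, Y) (P, Q) - {(0, Y)}"
  proof
    assume "(x, y) \<in> closed_segment (0, Y) (P, Q) - {(0, Y)}"
    then obtain u where u: "0 \<le> u" "u \<le> 1" "(x, y) = (1 - u) *\<^sub>R (0, Y) + u *\<^sub>R (P, Q)" "(x, y) \<noteq> (0, Y)"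
      unfolding closed_segment_def by auto
    have xy: "x = u * P" "y = Y - u * (Y - Q)" using u(3) by (auto simp: algebra_simps)
    have "u \<noteq> 0" using u(4) xy by auto
    then have xpos: "0 < x" using u(1) P xy by simp
    have eq: "(Y - Q) * x + P * y = Y * P" unfolding xy by (simp add: algebra_simps)
    show False
    proof (cases "x < P")
      case True then show False using P2 xpos eq by auto
    next
      case False
      then have "u = 1" using xy P u(2) by (metis mult_le_cancel_right1 not_less order_antisym)
      then show False using C3 xy by simp
    qed
  qed
  show ?thesis using mem n1 n2 by blast
qed


lemma int_facts:
  fixes a1 a2 d1 d2 :: nat and S1 S2 :: "nat \<Rightarrow> nat"
  assumes npos: "0 < a1 + a2"
    and cp: "compatible_pair a1 a2 S1 S2"
    and b1: "\<forall>h \<in> D1 a1 a2. S1 h \<le> d1"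
    and b2: "\<forall>v \<in> D2 a1 a2. S2 v \<le> d2"
  defines "s1 \<equiv> int (grading_size1 a1 a2 S1)" and "s2 \<equiv> int (grading_size2 a1 a2 S2)"
  shows "0 \<le> s1" "s1 \<le> int d1 * int a1" "0 \<le> s2" "s2 \<le> int d2 * int a2"
    "int d2 * int a2 \<le> int a1 \<Longrightarrow> s1 \<le> int d1 * (int a1 - s2)"
    "int d1 * int a1 \<le> int a2 \<Longrightarrow> s2 \<le> int d2 * (int a2 - s1)"
    "0 < a1 \<Longrightarrow> 0 < s2 \<Longrightarrow> \<exists>m. min s2 (int a1) \<le> m \<and> m \<le> int a1 \<and>
        int a1 * s1 \<le> int d1 * int a1 * (int a1 - m) + int a2 * m - 1"
    "0 < a2 \<Longrightarrow> 0 < s1 \<Longrightarrow> \<exists>m. min s1 (int a2) \<le> m \<and> m \<le> int a2 \<and>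
        int a2 * s2 \<le> int d2 * int a2 * (int a2 - m) + int a1 * m - 1"
proof -
  let ?N = "int (a1 + a2)"
  let ?hv = "hvC a1 a2"
  let ?A = "AC a1 a2 S1"
  let ?B = "BC a1 a2 S2"
  have NCp: "0 < ?N" using npos by linarith
  have hvper: "\<And>i. ?hv (i + ?N) = ?hv i" by (rule hvC_per[OF npos])
  have hvmod: "\<And>x. ?hv (x mod ?N) = ?hv x" by (rule hv_mod'[OF npos])
  have modN: "\<And>i. (i + ?N) mod ?N = i mod ?N" by simp
  have inD1: "\<And>i. ?hv i \<Longrightarrow> nat (i mod ?N) \<in> D1 a1 a2"
    unfolding D1_char[OF npos] using NCp hvmod by (simp add: nat_less_iff)
  have inD2: "\<And>i. \<not> ?hv i \<Longrightarrow> nat (i mod ?N) \<in> D2 a1 a2"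
    unfolding D2_char[OF npos] using NCp hvmod by (simp add: nat_less_iff)
  have g: "gen ?N ?hv ?A ?B (int a1) (int a2) (int d1)"
  proof (unfold_locales)
    show "0 < ?N" by (rule NCp)
    show "\<And>i. ?hv (i + ?N) = ?hv i" by (rule hvper)
    show "\<And>i. ?A (i + ?N) = ?A i" using hvper[simplified] by (simp add: AC_def[OF npos])
    show "\<And>i. ?B (i + ?N) = ?B i" using hvper[simplified] by (simp add: BC_def[OF npos])
    show "\<And>i. 0 \<le> ?A i" unfolding AC_def[OF npos] by simp
    show "\<And>i. 0 \<le> ?B i" unfolding BC_def[OF npos] by simp
    show "\<And>i. \<not> ?hv i \<Longrightarrow> ?A i = 0" unfolding AC_def[OF npos] by simp
    show "\<And>i. ?hv i \<Longrightarrow> ?B i = 0" unfolding BC_def[OF npos] by simp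
    show "\<And>i. ?A i \<le> int d1" unfolding AC_def[OF npos] using inD1 b1 by auto
    show "int a1 = (\<Sum>i\<in>{0..<?N}. if ?hv i then 1 else 0)" using count_H[OF npos] by simp
    show "int a2 = ?N - int a1" by simp
    show "\<And>h m. ?hv h \<Longrightarrow> \<not> ?hv (h + m) \<Longrightarrow> 0 \<le> m \<Longrightarrow> m < ?N \<Longrightarrow>
      (\<exists>e. h \<le> e \<and> e < h + m \<and> (\<Sum>i\<in>{h..<e+1}. if ?hv i then - ?A i else 1) = 0)
    \<or> (\<exists>e. h < e \<and> e \<le> h + m \<and> (\<Sum>i\<in>{e..<h+m+1}. if ?hv i then 1 else - ?B i) = 0)"
      by (rule CP_conc[OF npos cp])
    show "\<And>p q. p \<le> q \<Longrightarrow> ?hv p \<Longrightarrow> \<not> ?hv q \<Longrightarrow>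
      int a1 * (\<Sum>i\<in>{p..<q+1}. if ?hv i then 0 else 1) \<le> int a2 * (\<Sum>i\<in>{p..<q+1}. if ?hv i then 1 else 0) + int a1 - 1"
      by (rule CH1[OF npos])
  qed
  have Ble: "\<And>i. ?B i \<le> int d2" unfolding BC_def[OF npos] using inD2 b2 by auto
  have g2: "gen ?N (\<lambda>i. \<not> ?hv (- i)) (\<lambda>i. ?B (- i)) (\<lambda>i. ?A (- i)) (int a2) (int a1) (int d2)"
    by (rule gen_mirror[OF g Ble CH2[OF npos]])
  interpret G1: gen ?N ?hv ?A ?B "int a1" "int a2" "int d1" by (rule g)
  interpret G2: gen ?N "\<lambda>i. \<not> ?hv (- i)" "\<lambda>i. ?B (- i)" "\<lambda>i. ?A (- i)" "int a2" "int a1" "int d2" by (rule g2)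
  have Aper: "\<And>i. ?A (i + ?N) = ?A i" by (rule G1.A_per)
  have Bper: "\<And>i. ?B (i + ?N) = ?B i" by (rule G1.B_per)
  have nA: "(\<Sum>i\<in>{0..<?N}. ?A (- i)) = (\<Sum>i\<in>{0..<?N}. ?A i)"
    by (rule neg_per_sum[where \<phi>="?A", OF Aper]) (use NCp in simp)
  have nB: "(\<Sum>i\<in>{0..<?N}. ?B (- i)) = (\<Sum>i\<in>{0..<?N}. ?B i)"
    by (rule neg_per_sum[where \<phi>="?B", OF Bper]) (use NCp in simp)
  have s1e: "s1 = (\<Sum>i\<in>{0..<?N}. ?A i)"
  proof -
    have "(\<Sum>i\<in>{0..<?N}. ?A i) = (\<Sum>j\<in>{0..<a1+a2}. ?A (int j))"
      by (rule sum.reindex_bij_witness[of _ "\<lambda>j. int j" "\<lambda>i. nat i"]) auto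
    also have "\<dots> = (\<Sum>j\<in>{0..<a1+a2}. if j \<in> D1 a1 a2 then int (S1 j) else 0)"
      unfolding AC_def[OF npos] D1_char[OF npos] by (intro sum.cong) (auto simp: of_nat_mod[symmetric])
    also have "\<dots> = (\<Sum>j\<in>D1 a1 a2. int (S1 j))"
    proof -
      have "D1 a1 a2 = {0..<a1+a2} \<inter> D1 a1 a2" unfolding D1_def by auto
      then show ?thesis by (metis (no_types) finite_atLeastLessThan sum.inter_restrict)
    qed
    finally show ?thesis unfolding s1_def grading_size1_def by simp
  qed
  have s2e: "s2 = (\<Sum>i\<in>{0..<?N}. ?B i)"
  proof -
    have "(\<Sum>i\<in>{0..<?N}. ?B i) = (\<Sum>j\<in>{0..<a1+a2}. ?B (int j))"
      by (rule sum.reindex_bij_witness[of _ "\<lambda>j. int j" "\<lambda>i. nat i"]) auto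
    also have "\<dots> = (\<Sum>j\<in>{0..<a1+a2}. if j \<in> D2 a1 a2 then int (S2 j) else 0)"
      unfolding BC_def[OF npos] D2_char[OF npos] by (intro sum.cong) (auto simp: of_nat_mod[symmetric])
    also have "\<dots> = (\<Sum>j\<in>D2 a1 a2. int (S2 j))"
    proof -
      have "D2 a1 a2 = {0..<a1+a2} \<inter> D2 a1 a2" unfolding D2_def by auto
      then show ?thesis by (metis (no_types) finite_atLeastLessThan sum.inter_restrict)
    qed
    finally show ?thesis unfolding s2_def grading_size2_def by simp
  qed
  show "0 \<le> s1" unfolding s1_def by simp
  show "0 \<le> s2" unfolding s2_def by simp
  show "s1 \<le> int d1 * int a1" using G1.A_sum_le s1e by simp
  show "s2 \<le> int d2 * int a2" using G2.A_sum_le s2e nB by simp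
  show "int d2 * int a2 \<le> int a1 \<Longrightarrow> s1 \<le> int d1 * (int a1 - s2)"
  proof -
    assume h: "int d2 * int a2 \<le> int a1"
    have "(\<Sum>i\<in>{0..<?N}. ?A i) \<le> int d1 * (int a1 - (\<Sum>i\<in>{0..<?N}. ?B i))"
    proof (rule G1.run_bound)
      fix v j assume vj: "\<not> ?hv v" "1 \<le> j" "j \<le> ?B v"
      have "j \<le> int d2" using vj Ble[of v] by simp
      then show "?hv (v - j)" using run_a[OF npos h vj(1,2)] by simp
    qed
    then show ?thesis using s1e s2e by simp
  qed
  show "int d1 * int a1 \<le> int a2 \<Longrightarrow> s2 \<le> int d2 * (int a2 - s1)"
  proof -
    assume h: "int d1 * int a1 \<le> int a2"
    have "(\<Sum>i\<in>{0..<?N}. ?B (- i)) \<le> int d2 * (int a2 - (\<Sum>i\<in>{0..<?N}. ?A (- i)))"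
    proof (rule G2.run_bound)
      fix v j assume vj: "\<not> \<not> ?hv (- v)" "1 \<le> j" "j \<le> ?A (- v)"
      have "j \<le> int d1" using vj G1.A_le[of "- v"] by simp
      moreover have "?hv (- v)" using vj(1) by simp
      ultimately have "\<not> ?hv (- v + j)" using run_b[OF npos h, of "- v" j] vj(2) by simp
      then show "\<not> ?hv (- (v - j))" by simp
    qed
    then show ?thesis using s1e s2e nA nB by simp
  qed
  show "0 < a1 \<Longrightarrow> 0 < s2 \<Longrightarrow> \<exists>m. min s2 (int a1) \<le> m \<and> m \<le> int a1 \<and>
        int a1 * s1 \<le> int d1 * int a1 * (int a1 - m) + int a2 * m - 1"
    using G1.mainL s1e s2e by simp
  show "0 < a2 \<Longrightarrow> 0 < s1 \<Longrightarrow> \<exists>m. min s1 (int a2) \<le> m \<and> m \<le> int a2 \<and>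
        int a2 * s2 \<le> int d2 * int a2 * (int a2 - m) + int a1 * m - 1"
    using G2.mainL s1e s2e nA nB by simp
qed


theorem proposition4p22:
  fixes d1 d2 a1 a2 :: nat and S1 S2 :: "nat \<Rightarrow> nat"
  assumes "compatible_pair a1 a2 S1 S2"
    and "\<forall>h \<in> D1 a1 a2. S1 h \<le> d1"
    and "\<forall>v \<in> D2 a1 a2. S2 v \<le> d2"
  shows
   "(d2 * a2 \<le> a1 \<longrightarrow>
      (real (grading_size1 a1 a2 S1), real (grading_size2 a1 a2 S2)) \<in>
        convex hull {(0, 0), (real (d1 * a1), 0), (0, real (d2 * a2)),
                     (real (d1 * a1) - real (d1 * d2 * a2), real (d2 * a2))})
    \<and> (d1 * a1 \<le> a2 \<longrightarrow>
      (real (grading_size1 a1 a2 S1), real (grading_size2 a1 a2 S2)) \<in>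
        convex hull {(0, 0), (real (d1 * a1), 0), (0, real (d2 * a2)),
                     (real (d1 * a1), real (d2 * a2) - real (d1 * d2 * a1))})
    \<and> (0 < a1 \<and> a1 < d2 * a2 \<and> 0 < a2 \<and> a2 < d1 * a1 \<longrightarrow>
      (real (grading_size1 a1 a2 S1), real (grading_size2 a1 a2 S2)) \<in>
        (convex hull {(0, 0), (real (d1 * a1), 0), (real a2, real a1)}
         \<union> convex hull {(0, 0), (real a2, real a1), (0, real (d2 * a2))})
        - ((closed_segment (real (d1 * a1), 0) (real a2, real a1) - {(real (d1 * a1), 0)})
           \<union> (closed_segment (0, real (d2 * a2)) (real a2, real a1) - {(0, real (d2 * a2))})))"
proof -
  let ?g1 = "grading_size1 a1 a2 S1"
  let ?g2 = "grading_size2 a1 a2 S2"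
  show ?thesis
  proof (cases "a1 + a2 = 0")
    case True
    then have z: "a1 = 0" "a2 = 0" by auto
    have "D1 a1 a2 = {}" "D2 a1 a2 = {}" unfolding D1_def D2_def using z by auto
    then have "?g1 = 0" "?g2 = 0" unfolding grading_size1_def grading_size2_def by auto
    then show ?thesis using z by (auto intro: hull_inc)
  next
    case False
    then have npos: "0 < a1 + a2" by simp
    note F = int_facts[OF npos assms]
    show ?thesis
    proof (intro conjI impI)
      assume h: "d2 * a2 \<le> a1"
      have hi: "int d2 * int a2 \<le> int a1" using h by (metis of_nat_le_iff of_nat_mult)
      have i1: "int ?g1 + int d1 * int ?g2 \<le> int d1 * int a1" using F(5)[OF hi] by (simp add: algebra_simps)
      have r1: "real ?g1 + real d1 * real ?g2 \<le> real d1 * real a1"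
      proof -
        have "real_of_int (int ?g1 + int d1 * int ?g2) \<le> real_of_int (int d1 * int a1)" using i1 by (simp only: of_int_le_iff)
        then show ?thesis by simp
      qed
      have r2: "real ?g2 \<le> real (d2 * a2)" using F(4) by (metis of_int_le_iff of_int_of_nat_eq of_nat_mult)
      have r3: "real d1 * real (d2 * a2) \<le> real (d1 * a1)"
        using h by (metis mult_le_mono2 of_nat_le_iff of_nat_mult)
      have e: "real (d1 * d2 * a2) = real d1 * real (d2 * a2)" by simp
      show "(real ?g1, real ?g2) \<in> convex hull {(0, 0), (real (d1 * a1), 0), (0, real (d2 * a2)),
                     (real (d1 * a1) - real (d1 * d2 * a2), real (d2 * a2))}"
        unfolding e by (rule trap_a) (use r1 r2 r3 in auto)
    next
      assume h: "d1 * a1 \<le> a2"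
      have hi: "int d1 * int a1 \<le> int a2" using h by (metis of_nat_le_iff of_nat_mult)
      have i1: "int ?g2 + int d2 * int ?g1 \<le> int d2 * int a2" using F(6)[OF hi] by (simp add: algebra_simps)
      have r1: "real ?g2 + real d2 * real ?g1 \<le> real d2 * real a2"
      proof -
        have "real_of_int (int ?g2 + int d2 * int ?g1) \<le> real_of_int (int d2 * int a2)" using i1 by (simp only: of_int_le_iff)
        then show ?thesis by simp
      qed
      have r2: "real ?g1 \<le> real (d1 * a1)" using F(2) by (metis of_int_le_iff of_int_of_nat_eq of_nat_mult)
      have r3: "real d2 * real (d1 * a1) \<le> real (d2 * a2)"
        using h by (metis mult_le_mono2 of_nat_le_iff of_nat_mult)
      have e: "real (d1 * d2 * a1) = real d2 * real (d1 * a1)" by simp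
      show "(real ?g1, real ?g2) \<in> convex hull {(0, 0), (real (d1 * a1), 0), (0, real (d2 * a2)),
                     (real (d1 * a1), real (d2 * a2) - real (d1 * d2 * a1))}"
        unfolding e by (rule trap_b) (use r1 r2 r3 in auto)
    next
      assume h: "0 < a1 \<and> a1 < d2 * a2 \<and> 0 < a2 \<and> a2 < d1 * a1"
      define s1 where "s1 = int ?g1"
      define s2 where "s2 = int ?g2"
      have s1nn: "0 \<le> s1" and s2nn: "0 \<le> s2" unfolding s1_def s2_def by simp_all
      have hX: "int a2 < int d1 * int a1" and hY: "int a1 < int d2 * int a2"
        using h by (metis of_nat_less_iff of_nat_mult)+
      have C3: "\<not> (int a2 \<le> s1 \<and> int a1 \<le> s2)"
      proof
        assume c: "int a2 \<le> s1 \<and> int a1 \<le> s2"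
        have "0 < s2" using c h by simp
        then obtain m where m: "min s2 (int a1) \<le> m" "m \<le> int a1"
          "int a1 * s1 \<le> int d1 * int a1 * (int a1 - m) + int a2 * m - 1"
          using F(7) h unfolding s1_def s2_def by blast
        have "m = int a1" using m c by simp
        then have "int a1 * s1 \<le> int a2 * int a1 - 1" using m by (simp add: algebra_simps)
        moreover have "int a1 * int a2 \<le> int a1 * s1" using c by (intro mult_left_mono) auto
        ultimately show False by (simp add: algebra_simps)
      qed
      have P1: "s2 < int a1 \<Longrightarrow> s2 = 0 \<or> int a1 * s1 + (int d1 * int a1 - int a2) * s2 < int d1 * int a1 * int a1"
      proof -
        assume lt: "s2 < int a1"
        show ?thesis
        proof (cases "s2 = 0")
          case False
          then have "0 < s2" using s2nn by simp
          then obtain m where m: "min s2 (int a1) \<le> m" "m \<le> int a1"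
            "int a1 * s1 \<le> int d1 * int a1 * (int a1 - m) + int a2 * m - 1"
            using F(7) h unfolding s1_def s2_def by blast
          have "s2 \<le> m" using m lt by simp
          then have "(int d1 * int a1 - int a2) * s2 \<le> (int d1 * int a1 - int a2) * m"
            using hX by (intro mult_left_mono) auto
          then have "int a1 * s1 + (int d1 * int a1 - int a2) * s2 \<le> int d1 * int a1 * (int a1 - m) + int a2 * m - 1 + (int d1 * int a1 - int a2) * m"
            using m(3) by linarith
          also have "\<dots> = int d1 * int a1 * int a1 - 1" by (simp add: algebra_simps)
          finally show ?thesis by simp
        qed simp
      qed
      have P2: "s1 < int a2 \<Longrightarrow> s1 = 0 \<or> (int d2 * int a2 - int a1) * s1 + int a2 * s2 < int d2 * int a2 * int a2"
      proof -
        assume lt: "s1 < int a2"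
        show ?thesis
        proof (cases "s1 = 0")
          case False
          then have "0 < s1" using s1nn by simp
          then obtain m where m: "min s1 (int a2) \<le> m" "m \<le> int a2"
            "int a2 * s2 \<le> int d2 * int a2 * (int a2 - m) + int a1 * m - 1"
            using F(8) h unfolding s1_def s2_def by blast
          have "s1 \<le> m" using m lt by simp
          then have "(int d2 * int a2 - int a1) * s1 \<le> (int d2 * int a2 - int a1) * m"
            using hY by (intro mult_left_mono) auto
          then have "(int d2 * int a2 - int a1) * s1 + int a2 * s2 \<le> int d2 * int a2 * (int a2 - m) + int a1 * m - 1 + (int d2 * int a2 - int a1) * m"
            using m(3) by linarith
          also have "\<dots> = int d2 * int a2 * int a2 - 1" by (simp add: algebra_simps)
          finally show ?thesis by simp
        qed simp
      qed
      have R: "\<And>u v :: int. u \<le> v \<Longrightarrow> real_of_int u \<le> real_of_int v" by simp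
      have R': "\<And>u v :: int. u < v \<Longrightarrow> real_of_int u < real_of_int v" by simp
      show "(real ?g1, real ?g2) \<in>
        (convex hull {(0, 0), (real (d1 * a1), 0), (real a2, real a1)}
         \<union> convex hull {(0, 0), (real a2, real a1), (0, real (d2 * a2))})
        - ((closed_segment (real (d1 * a1), 0) (real a2, real a1) - {(real (d1 * a1), 0)})
           \<union> (closed_segment (0, real (d2 * a2)) (real a2, real a1) - {(0, real (d2 * a2))}))"
      proof (rule quad_c)
        show "0 < real a2" "0 < real a1" using h by auto
        show "real a2 < real (d1 * a1)" "real a1 < real (d2 * a2)" using h by (simp_all only: of_nat_less_iff)
        show "0 \<le> real ?g1" "0 \<le> real ?g2" by simp_all
        show "real ?g1 \<le> real (d1 * a1)" using F(2) by (metis of_int_le_iff of_int_of_nat_eq of_nat_mult)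
        show "real ?g2 \<le> real (d2 * a2)" using F(4) by (metis of_int_le_iff of_int_of_nat_eq of_nat_mult)
        show "\<not> (real a2 \<le> real ?g1 \<and> real a1 \<le> real ?g2)" using C3 unfolding s1_def s2_def by simp
      next
        assume lt: "real ?g2 < real a1"
        then have "s2 < int a1" unfolding s2_def by simp
        then have "s2 = 0 \<or> int a1 * s1 + (int d1 * int a1 - int a2) * s2 < int d1 * int a1 * int a1" by (rule P1)
        then show "real ?g2 = 0 \<or> real a1 * real ?g1 + (real (d1 * a1) - real a2) * real ?g2 < real (d1 * a1) * real a1"
        proof
          assume "s2 = 0" then show ?thesis unfolding s2_def by simp
        next
          assume "int a1 * s1 + (int d1 * int a1 - int a2) * s2 < int d1 * int a1 * int a1"
          then have "real_of_int (int a1 * s1 + (int d1 * int a1 - int a2) * s2) < real_of_int (int d1 * int a1 * int a1)" by (rule R')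
          then show ?thesis unfolding s1_def s2_def by simp
        qed
      next
        assume lt: "real ?g1 < real a2"
        then have "s1 < int a2" unfolding s1_def by simp
        then have "s1 = 0 \<or> (int d2 * int a2 - int a1) * s1 + int a2 * s2 < int d2 * int a2 * int a2" by (rule P2)
        then show "real ?g1 = 0 \<or> (real (d2 * a2) - real a1) * real ?g1 + real a2 * real ?g2 < real (d2 * a2) * real a2"
        proof
          assume "s1 = 0" then show ?thesis unfolding s1_def by simp
        next
          assume "(int d2 * int a2 - int a1) * s1 + int a2 * s2 < int d2 * int a2 * int a2"
          then have "real_of_int ((int d2 * int a2 - int a1) * s1 + int a2 * s2) < real_of_int (int d2 * int a2 * int a2)" by (rule R')
          then show ?thesis unfolding s1_def s2_def by simp
        qed
      qed
    qed
  qed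
qed


end
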